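(* Let $F$ be a monotonic neighborhood frame. There exists a neighborhood frame $G$ with $\mathrm{Th}_{L_=}(G)=\mathrm{Th}_{L_=}(F)$ such that there is a surjective bounded morphism $f:G\to\mathrm{ue}\,F$. Moreover, if $\mathcal K_0$ is either the class of monotonic neighborhood frames or the class of quasi-filter neighborhood frames, and $F\in\mathcal K_0$, then $G$ can be taken in $\mathcal K_0$.
   Context: A neighborhood frame is a pair $F=(F,N^F)$ with $N^F: F\to\mathscr P(\mathscr P(F))$. It is monotonic if each $N^F(w)$ is closed under supersets; quasi-filter if it is monotonic and each $N^F(w)$ is closed under intersections of nonempty finite families. $L_=$ is the least set of formulas containing equality atoms and closed under Boolean combinations, existential quantification, and formation of $x\,\Box_y\,\phi$ ($y$ bound). Satisfaction: as in first-order logic, with $F\models w\,\Box_y\,\phi(y)$ iff $\{v\in F: F\models\phi(v)\}\in N^F(w)$. $\mathrm{Th}_{L_=}(F)$ is the set of $L_=$-sentences true in $F$. A map $f:F\to F'$ is a bounded morphism if for all $w\in F$, $U'\subseteq F'$: $f^{-1}(U')\in N^F(w)\iff U'\in N^{F'}(f(w))$. For a monotonic frame $F$, $F^+=(\mathscr P(F),\Box^F)$ with $\Box^F(X)=\{w: X\in N^F(w)\}$. For a Boolean algebra with monotone operator $(A,\Box)$, $\mathrm{Uf}(A)$ is its set of ultrafilters, $[a]=\{u: a\in u\}$, and closed sets are intersections of sets $[a]$. The ultrafilter frame $\mathrm{Uf}(A)$ has $U\in N^\sigma(u)$ iff there is a closed $K\subseteq U$ such that $[a]\supseteq K$ implies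 $\Box(a)\in u$ for all $a\in A$. The ultrafilter extension is $\mathrm{ue}\,F=\mathrm{Uf}(F^+)$. *)

theory Defs
  imports Main
begin

type_synonym 'a nframe = "'a set \<times> ('a \<Rightarrow> 'a set set)"

definition pts :: "'a nframe \<Rightarrow> 'a set" where "pts F = fst F"
definition nb :: "'a nframe \<Rightarrow> 'a \<Rightarrow> 'a set set" where "nb F = snd F"

definition nframe :: "'a nframe \<Rightarrow> bool" where
  "nframe F \<longleftrightarrow> (\<forall>w\<in>pts F. nb F w \<subseteq> Pow (pts F))"

definition monotonic :: "'a nframe \<Rightarrow> bool" where
  "monotonic F \<longleftrightarrow> nframe F \<and>
     (\<forall>w\<in>pts F. \<forall>X Y. X \<in> nb F w \<and> X \<subseteq> Y \<and> Y \<subseteq> pts F \<longrightarrow> Y \<in> nb F w)"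

definition quasi_filter :: "'a nframe \<Rightarrow> bool" where
  "quasi_filter F \<longleftrightarrow> monotonic F \<and>
     (\<forall>w\<in>pts F. \<forall>S. finite S \<and> S \<noteq> {} \<and> S \<subseteq> nb F w \<longrightarrow> \<Inter>S \<in> nb F w)"

datatype form =
    Eq nat nat
  | Neg form
  | Conj form form
  | Ex nat form
  | Box nat nat form   \<comment> \<open>Box x y phi is x box_y phi, with y bound\<close>

fun fv :: "form \<Rightarrow> nat set" where
  "fv (Eq x y) = {x, y}"
| "fv (Neg p) = fv p"
| "fv (Conj p q) = fv p \<union> fv q"
| "fv (Ex x p) = fv p - {x}"
| "fv (Box x y p) = insert x (fv p - {y})"

definition sentence :: "form \<Rightarrow> bool" where "sentence p \<longleftrightarrow> fv p = {}"

fun sat :: "'a nframe \<Rightarrow> (nat \<Rightarrow> 'a) \<Rightarrow> form \<Rightarrow> bool" where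
  "sat F g (Eq x y) = (g x = g y)"
| "sat F g (Neg p) = (\<not> sat F g p)"
| "sat F g (Conj p q) = (sat F g p \<and> sat F g q)"
| "sat F g (Ex x p) = (\<exists>v\<in>pts F. sat F (g(x := v)) p)"
| "sat F g (Box x y p) = ({v \<in> pts F. sat F (g(y := v)) p} \<in> nb F (g x))"

text \<open>Truth of a sentence (independent of the assignment, since it has no free variables).\<close>
definition holds :: "'a nframe \<Rightarrow> form \<Rightarrow> bool" where
  "holds F p \<longleftrightarrow> (\<forall>g. sat F g p)"

definition Th :: "'a nframe \<Rightarrow> form set" where
  "Th F = {p. sentence p \<and> holds F p}"

definition bounded_morphism :: "'a nframe \<Rightarrow> 'b nframe \<Rightarrow> ('a \<Rightarrow> 'b) \<Rightarrow> bool" where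
  "bounded_morphism F F' f \<longleftrightarrow> f ` pts F \<subseteq> pts F' \<and>
     (\<forall>w\<in>pts F. \<forall>U'. U' \<subseteq> pts F' \<longrightarrow>
        ({v \<in> pts F. f v \<in> U'} \<in> nb F w \<longleftrightarrow> U' \<in> nb F' (f w)))"

definition cbox :: "'a nframe \<Rightarrow> 'a set \<Rightarrow> 'a set" where
  "cbox F X = {w \<in> pts F. X \<in> nb F w}"

definition ultrafilter_on :: "'a set \<Rightarrow> 'a set set \<Rightarrow> bool" where
  "ultrafilter_on W u \<longleftrightarrow> u \<subseteq> Pow W \<and> W \<in> u \<and> {} \<notin> u \<and>
     (\<forall>X\<in>u. \<forall>Y\<in>u. X \<inter> Y \<in> u) \<and>
     (\<forall>X\<in>u. \<forall>Y. X \<subseteq> Y \<and> Y \<subseteq> W \<longrightarrow> Y \<in> u) \<and>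
     (\<forall>X. X \<subseteq> W \<longrightarrow> X \<in> u \<or> W - X \<in> u)"

definition Uf :: "'a set \<Rightarrow> 'a set set set" where
  "Uf W = {u. ultrafilter_on W u}"

definition basic :: "'a set \<Rightarrow> 'a set \<Rightarrow> 'a set set set" where
  "basic W a = {u \<in> Uf W. a \<in> u}"

definition closed_uf :: "'a set \<Rightarrow> 'a set set set \<Rightarrow> bool" where
  "closed_uf W K \<longleftrightarrow> (\<exists>S \<subseteq> Pow W. K = Uf W \<inter> (\<Inter>a\<in>S. basic W a))"

definition ue :: "'a nframe \<Rightarrow> 'a set set nframe" where
  "ue F = (Uf (pts F),
     \<lambda>u. {U. U \<subseteq> Uf (pts F) \<and>
            (\<exists>K. closed_uf (pts F) K \<and> K \<subseteq> U \<and>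
                 (\<forall>a. a \<subseteq> pts F \<longrightarrow> K \<subseteq> basic (pts F) a \<longrightarrow> cbox F a \<in> u))})"

end

theory Submission
  imports Defs
begin


lemma finite_fv: "finite (fv p)"
  by (induction p) auto

lemma sat_fv:
  "(\<forall>z\<in>fv p. g z = g' z) \<Longrightarrow> sat F g p = sat F g' p"
proof (induction p arbitrary: g g')
  case (Ex x p)
  have "\<And>v. sat F (g(x := v)) p = sat F (g'(x := v)) p"
    using Ex.prems by (intro Ex.IH) auto
  then show ?case by simp
next
  case (Box x y p)
  have "\<And>v. sat F (g(y := v)) p = sat F (g'(y := v)) p"
    using Box.prems by (intro Box.IH) auto
  moreover have "g x = g' x" using Box.prems by simp
  ultimately show ?case by simp
next
  case (Conj p q)
  have "sat F g p = sat F g' p" "sat F g q = sat F g' q"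
    using Conj.prems by (intro Conj.IH; auto)+
  then show ?case by simp
qed auto

lemma sentence_sat_indep:
  "sentence p \<Longrightarrow> sat F g p = sat F g' p"
  by (rule sat_fv) (simp add: sentence_def)

lemma holds_sentence: "sentence p \<Longrightarrow> holds F p \<longleftrightarrow> sat F g p"
  unfolding holds_def using sentence_sat_indep by blast

lemma sat_iso:
  fixes F1 :: "'b nframe" and F2 :: "'c nframe"
  assumes inj: "inj_on \<iota> (pts F1)" and im: "\<iota> ` pts F1 = pts F2"
    and nbc: "\<And>w X. w \<in> pts F1 \<Longrightarrow> X \<subseteq> pts F1 \<Longrightarrow> X \<in> nb F1 w \<longleftrightarrow> \<iota> ` X \<in> nb F2 (\<iota> w)"
  shows "(\<forall>z\<in>fv p. g z \<in> pts F1) \<Longrightarrow> sat F1 g p = sat F2 (\<iota> \<circ> g) p"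
proof (induction p arbitrary: g)
  case (Eq x y)
  then show ?case using inj by (auto simp: inj_on_def)
next
  case (Neg p) then show ?case by simp
next
  case (Conj p q) then show ?case by simp
next
  case (Ex x p)
  have "\<And>v. v \<in> pts F1 \<Longrightarrow> sat F1 (g(x := v)) p = sat F2 (\<iota> \<circ> g(x := v)) p"
    using Ex.prems by (intro Ex.IH) auto
  then have "sat F1 g (Ex x p) \<longleftrightarrow> (\<exists>v\<in>pts F1. sat F2 (\<iota> \<circ> g(x := v)) p)"
    by auto
  also have "\<dots> \<longleftrightarrow> (\<exists>v\<in>pts F1. sat F2 ((\<iota> \<circ> g)(x := \<iota> v)) p)"
    by (simp add: fun_upd_comp)
  also have "\<dots> \<longleftrightarrow> (\<exists>v'\<in>pts F2. sat F2 ((\<iota> \<circ> g)(x := v')) p)"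
    by (simp add: im[symmetric])
  finally show ?case by (simp add: comp_def)
next
  case (Box x y p)
  have gx: "g x \<in> pts F1" using Box.prems by simp
  have eq: "\<iota> ` {v \<in> pts F1. sat F1 (g(y := v)) p} = {v' \<in> pts F2. sat F2 ((\<iota> \<circ> g)(y := v')) p}"
  proof -
    have "\<And>v. v \<in> pts F1 \<Longrightarrow> sat F1 (g(y := v)) p = sat F2 ((\<iota> \<circ> g)(y := \<iota> v)) p"
      using Box.prems by (subst Box.IH) (auto simp: fun_upd_comp)
    then show ?thesis using im by (auto simp: image_iff) (metis (mono_tags, lifting) imageE mem_Collect_eq)
  qed
  have "sat F1 g (Box x y p) \<longleftrightarrow> \<iota> ` {v \<in> pts F1. sat F1 (g(y := v)) p} \<in> nb F2 (\<iota> (g x))"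
    by (simp add: nbc[OF gx])
  then show ?case by (simp add: eq comp_def)
qed

lemma Th_iso:
  fixes F1 :: "'b nframe" and F2 :: "'c nframe"
  assumes inj: "inj_on \<iota> (pts F1)" and im: "\<iota> ` pts F1 = pts F2"
    and nbc: "\<And>w X. w \<in> pts F1 \<Longrightarrow> X \<subseteq> pts F1 \<Longrightarrow> X \<in> nb F1 w \<longleftrightarrow> \<iota> ` X \<in> nb F2 (\<iota> w)"
  shows "Th F1 = Th F2"
proof -
  have "holds F1 p = holds F2 p" if "sentence p" for p
  proof -
    fix g :: "nat \<Rightarrow> 'b"
    have "holds F1 p = sat F1 g p" using holds_sentence[OF that] by blast
    also have "\<dots> = sat F2 (\<iota> \<circ> g) p"
      by (rule sat_iso[OF inj im nbc]) (use that in \<open>auto simp: sentence_def\<close>)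
    also have "\<dots> = holds F2 p" using holds_sentence[OF that] by blast
    finally show ?thesis .
  qed
  then show ?thesis unfolding Th_def by auto
qed

lemma Uf_empty: "Uf {} = {}"
  by (auto simp: Uf_def ultrafilter_on_def)



definition tr :: "('b \<Rightarrow> 'c) \<Rightarrow> 'b nframe \<Rightarrow> 'c nframe" where
  "tr \<iota> G0 = (\<iota> ` pts G0, \<lambda>p. (\<lambda>X. \<iota> ` X) ` nb G0 (inv_into (pts G0) \<iota> p))"

lemma tr_pts: "pts (tr \<iota> G0) = \<iota> ` pts G0" by (simp add: tr_def pts_def)
lemma tr_nb: "nb (tr \<iota> G0) p = (\<lambda>X. \<iota> ` X) ` nb G0 (inv_into (pts G0) \<iota> p)"
  by (simp add: tr_def nb_def)

lemma tr_nbc: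
  assumes nf: "nframe G0" and inj: "inj_on \<iota> (pts G0)" and w: "w \<in> pts G0" and X: "X \<subseteq> pts G0"
  shows "\<iota> ` X \<in> nb (tr \<iota> G0) (\<iota> w) \<longleftrightarrow> X \<in> nb G0 w"
proof -
  have iw: "inv_into (pts G0) \<iota> (\<iota> w) = w" using inj w by simp
  have "\<iota> ` X \<in> nb (tr \<iota> G0) (\<iota> w) \<longleftrightarrow> (\<exists>X'\<in>nb G0 w. \<iota> ` X' = \<iota> ` X)"
    by (simp add: tr_nb iw image_iff) (metis)
  also have "\<dots> \<longleftrightarrow> X \<in> nb G0 w"
  proof
    assume "\<exists>X'\<in>nb G0 w. \<iota> ` X' = \<iota> ` X"
    then obtain X' where X': "X' \<in> nb G0 w" "\<iota> ` X' = \<iota> ` X" by blast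
    have "X' \<subseteq> pts G0" using nf X'(1) w by (auto simp: nframe_def)
    then have "X' = X" using inj_on_image_eq_iff[OF inj] X X'(2) by blast
    then show "X \<in> nb G0 w" using X' by simp
  qed auto
  finally show ?thesis .
qed

lemma transfer:
  fixes G0 :: "'b nframe" and \<iota> :: "'b \<Rightarrow> 'c"
  assumes mon: "monotonic G0" and inj: "inj_on \<iota> (pts G0)"
  shows "monotonic (tr \<iota> G0)" "Th (tr \<iota> G0) = Th G0"
    "quasi_filter G0 \<Longrightarrow> quasi_filter (tr \<iota> G0)"
    "bounded_morphism G0 F' f \<Longrightarrow> bounded_morphism (tr \<iota> G0) F' (f \<circ> inv_into (pts G0) \<iota>)"
    "(f \<circ> inv_into (pts G0) \<iota>) ` pts (tr \<iota> G0) = f ` pts G0"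
proof -
  have nf: "nframe G0" using mon by (simp add: monotonic_def)
  let ?G = "tr \<iota> G0"
  let ?j = "inv_into (pts G0) \<iota>"
  have pG: "pts ?G = \<iota> ` pts G0" by (rule tr_pts)
  have jinv: "\<And>w. w \<in> pts G0 \<Longrightarrow> ?j (\<iota> w) = w" using inj by simp
  have nbP: "\<And>w X. w \<in> pts G0 \<Longrightarrow> X \<in> nb G0 w \<Longrightarrow> X \<subseteq> pts G0"
    using nf by (auto simp: nframe_def)
  have nbG: "nb ?G (\<iota> w) = (\<lambda>X. \<iota> ` X) ` nb G0 w" if "w \<in> pts G0" for w
    by (simp add: tr_nb jinv[OF that])
  show nfG: "monotonic ?G"
    unfolding monotonic_def nframe_def
  proof (intro conjI ballI allI impI)
    fix p assume "p \<in> pts ?G"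
    then obtain w where w: "w \<in> pts G0" "p = \<iota> w" using pG by auto
    show "nb ?G p \<subseteq> Pow (pts ?G)" using w nbP by (auto simp: nbG pG)
  next
    fix p X Y assume p: "p \<in> pts ?G" and XY: "X \<in> nb ?G p \<and> X \<subseteq> Y \<and> Y \<subseteq> pts ?G"
    then obtain w where w: "w \<in> pts G0" "p = \<iota> w" using pG by auto
    from XY obtain X' where X': "X' \<in> nb G0 w" "X = \<iota> ` X'" using w by (auto simp: nbG)
    define Y' where "Y' = ?j ` Y"
    have Ysub: "Y \<subseteq> \<iota> ` pts G0" using XY pG by simp
    have "\<iota> ` Y' = (\<lambda>y. \<iota> (?j y)) ` Y" by (simp add: Y'_def image_image)
    also have "\<dots> = (\<lambda>y. y) ` Y"
      by (rule image_cong) (use Ysub in \<open>auto intro: f_inv_into_f\<close>)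
    finally have Y1: "Y = \<iota> ` Y'" by simp
    have Y2: "Y' \<subseteq> pts G0" unfolding Y'_def using Ysub by (auto intro: inv_into_into)
    note Y = Y1 Y2
    have "X' \<subseteq> Y'"
    proof
      fix x assume x: "x \<in> X'"
      then have "\<iota> x \<in> \<iota> ` Y'" using X'(2) XY Y1 by blast
      then show "x \<in> Y'" using inj_on_image_mem_iff[OF inj _ Y2] x nbP[OF w(1) X'(1)] by blast
    qed
    then have "Y' \<in> nb G0 w" using mon X' Y w by (auto simp: monotonic_def)
    then show "Y \<in> nb ?G p" using w Y by (simp add: nbG)
  qed
  show "Th ?G = Th G0"
    by (rule sym, rule Th_iso[OF inj pG[symmetric]]) (simp add: tr_nbc[OF nf inj])
  show "quasi_filter ?G" if qf: "quasi_filter G0"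
    unfolding quasi_filter_def
  proof (intro conjI ballI allI impI)
    show "monotonic ?G" by (rule nfG)
    fix p S assume p: "p \<in> pts ?G" and S: "finite S \<and> S \<noteq> {} \<and> S \<subseteq> nb ?G p"
    then obtain w where w: "w \<in> pts G0" "p = \<iota> w" using pG by auto
    define S' where "S' = {X \<in> nb G0 w. \<iota> ` X \<in> S}"
    have SS': "S = (\<lambda>X. \<iota> ` X) ` S'" using S w by (auto simp: S'_def nbG)
    have fin: "finite S'"
    proof -
      have "inj_on (\<lambda>X. \<iota> ` X) S'"
        using nbP[OF w(1)] inj by (auto simp: S'_def inj_on_def inj_on_image_eq_iff)
      then show ?thesis using S SS' finite_image_iff by metis
    qed
    have ne: "S' \<noteq> {}" using S SS' by auto
    have sub: "S' \<subseteq> nb G0 w" by (auto simp: S'_def)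
    have I: "\<Inter>S' \<in> nb G0 w" using qf w fin ne sub by (auto simp: quasi_filter_def)
    have "\<iota> ` \<Inter>S' = \<Inter>S"
    proof -
      obtain X0 where X0: "X0 \<in> S'" using ne by blast
      have "\<iota> ` (\<Inter>((\<lambda>X. X) ` S')) = (\<Inter>X\<in>S'. \<iota> ` X)"
        using inj nbP[OF w(1)] sub X0 by (intro image_INT[where C="pts G0"]) auto
      then have "\<iota> ` \<Inter>S' = (\<Inter>X\<in>S'. \<iota> ` X)" by simp
      then show ?thesis by (simp add: SS')
    qed
    then show "\<Inter>S \<in> nb ?G p" using I w by (metis nbG image_eqI)
  qed
  show "(f \<circ> ?j) ` pts ?G = f ` pts G0"
    unfolding pG image_comp by (rule image_cong) (simp_all add: jinv)
  show "bounded_morphism ?G F' (f \<circ> ?j)" if bm: "bounded_morphism G0 F' f"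
    unfolding bounded_morphism_def
  proof (intro conjI ballI allI impI)
    show "(f \<circ> ?j) ` pts ?G \<subseteq> pts F'" using bm pG jinv by (auto simp: bounded_morphism_def)
    fix p U' assume p: "p \<in> pts ?G" and U': "U' \<subseteq> pts F'"
    then obtain w where w: "w \<in> pts G0" "p = \<iota> w" using pG by auto
    have eq: "{v \<in> pts ?G. (f \<circ> ?j) v \<in> U'} = \<iota> ` {v \<in> pts G0. f v \<in> U'}"
      using pG jinv by (auto simp: image_iff)
    show "{v \<in> pts ?G. (f \<circ> ?j) v \<in> U'} \<in> nb ?G p \<longleftrightarrow> U' \<in> nb F' ((f \<circ> ?j) p)"
      unfolding eq using tr_nbc[OF nf inj w(1)] bm w U' jinv
      by (auto simp: bounded_morphism_def)
  qed
qed



definition fip :: "'i set set \<Rightarrow> bool" where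
  "fip M \<longleftrightarrow> (\<forall>s. finite s \<longrightarrow> s \<subseteq> M \<longrightarrow> \<Inter>s \<noteq> {})"

lemma zorn_max:
  fixes S :: "'i set set"
  assumes "fip S"
  shows "\<exists>M. S \<subseteq> M \<and> fip M \<and> (\<forall>X. S \<subseteq> X \<and> fip X \<and> M \<subseteq> X \<longrightarrow> X = M)"
proof -
  let ?A = "{M. S \<subseteq> M \<and> fip M}"
  have "\<exists>M\<in>?A. \<forall>X\<in>?A. M \<subseteq> X \<longrightarrow> X = M"
  proof (rule Zorn_Lemma2, intro ballI)
    fix C assume C: "C \<in> chains ?A"
    show "\<exists>U\<in>?A. \<forall>X\<in>C. X \<subseteq> U"
    proof (cases "C = {}")
      case True 
      have "S \<in> ?A" using assms by simp
      then show ?thesis using True by blast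
    next
      case False
      have CA: "C \<subseteq> ?A" using C by (simp add: chains_def)
      have ch: "subset.chain ?A C" using C by (simp add: chains_alt_def)
      have f: "fip (\<Union>C)" unfolding fip_def
      proof (intro allI impI)
        fix s assume s: "finite s" "s \<subseteq> \<Union>C"
        obtain B where B: "B \<in> C" "s \<subseteq> B"
          using finite_subset_Union_chain[OF s False ch] by blast
        have "fip B" using B(1) CA by blast
        then show "\<Inter>s \<noteq> {}" using s(1) B(2) unfolding fip_def by blast
      qed
      obtain B0 where "B0 \<in> C" using False by blast
      then have "S \<subseteq> \<Union>C" using CA by blast
      then have "\<Union>C \<in> ?A" using f by simp
      moreover have "\<forall>X\<in>C. X \<subseteq> \<Union>C" by blast
      ultimately show ?thesis by (rule bexI[rotated])
    qed
  qed
  then obtain M where M: "M \<in> ?A" and mx: "\<forall>X\<in>?A. M \<subseteq> X \<longrightarrow> X = M" by (rule bexE)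
  have "S \<subseteq> M" "fip M" using M by simp_all
  moreover have "\<forall>X. S \<subseteq> X \<and> fip X \<and> M \<subseteq> X \<longrightarrow> X = M"
  proof (intro allI impI)
    fix X assume "S \<subseteq> X \<and> fip X \<and> M \<subseteq> X"
    then show "X = M" using mx by simp
  qed
  ultimately show ?thesis by (intro exI[of _ M] conjI)
qed

lemma ultra_exists:
  fixes S :: "'i set set"
  assumes "fip S"
  shows "\<exists>D::'i filter. D \<noteq> bot \<and> (\<forall>P. eventually P D \<or> eventually (\<lambda>x. \<not> P x) D)
           \<and> (\<forall>X\<in>S. eventually (\<lambda>x. x \<in> X) D)"
proof -
  obtain M where M: "S \<subseteq> M" "fip M" and max0: "\<forall>X. S \<subseteq> X \<and> fip X \<and> M \<subseteq> X \<longrightarrow> X = M"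
    using zorn_max[OF assms] by (elim exE conjE)
  have max: "X = M" if "S \<subseteq> X \<and> fip X" "M \<subseteq> X" for X
    using max0 that by simp
  have add: "X \<in> M" if "\<And>s. finite s \<Longrightarrow> s \<subseteq> M \<Longrightarrow> \<Inter>s \<inter> X \<noteq> {}" for X
  proof -
    have "fip (insert X M)" unfolding fip_def
    proof (intro allI impI)
      fix s assume s: "finite s" "s \<subseteq> insert X M"
      show "\<Inter>s \<noteq> {}"
      proof (cases "X \<in> s")
        case True
        then have "\<Inter>s = \<Inter>(s - {X}) \<inter> X" by auto
        then show ?thesis using that[of "s - {X}"] s by auto
      next
        case False then show ?thesis using M(2) s by (auto simp: fip_def)
      qed
    qed
    then have "insert X M = M" using max M(1) by (meson subset_insertI subset_insertI2)
    then show ?thesis by (metis insertI1)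
  qed
  have ultra: "X \<in> M \<or> -X \<in> M" for X
  proof (rule ccontr)
    assume a: "\<not> (X \<in> M \<or> -X \<in> M)"
    have "\<not> (\<forall>s. finite s \<longrightarrow> s \<subseteq> M \<longrightarrow> \<Inter>s \<inter> X \<noteq> {})" using a add by blast
    then obtain s1 where s1: "finite s1" "s1 \<subseteq> M" "\<Inter>s1 \<inter> X = {}" by blast
    have "\<not> (\<forall>s. finite s \<longrightarrow> s \<subseteq> M \<longrightarrow> \<Inter>s \<inter> -X \<noteq> {})" using a add[of "-X"] by blast
    then obtain s2 where s2: "finite s2" "s2 \<subseteq> M" "\<Inter>s2 \<inter> -X = {}" by blast
    have e: "\<Inter>(s1 \<union> s2) = {}" using s1(3) s2(3) by auto
    have "finite (s1 \<union> s2)" "s1 \<union> s2 \<subseteq> M" using s1 s2 by auto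
    then have "\<Inter>(s1 \<union> s2) \<noteq> {}" using M(2) unfolding fip_def by blast
    then show False using e by simp
  qed
  define D :: "'i filter" where "D = Abs_filter (\<lambda>P. \<exists>s. finite s \<and> s \<subseteq> M \<and> \<Inter>s \<subseteq> {x. P x})"
  have isf: "is_filter (\<lambda>P. \<exists>s. finite s \<and> s \<subseteq> M \<and> \<Inter>s \<subseteq> {x. P x})"
  proof
    show "\<exists>s. finite s \<and> s \<subseteq> M \<and> \<Inter>s \<subseteq> {x. True}" by (rule exI[of _ "{}"]) auto
  next
    fix P Q assume "\<exists>s. finite s \<and> s \<subseteq> M \<and> \<Inter>s \<subseteq> {x. P x}" "\<exists>s. finite s \<and> s \<subseteq> M \<and> \<Inter>s \<subseteq> {x. Q x}"
    then obtain s t where "finite s" "s \<subseteq> M" "\<Inter>s \<subseteq> {x. P x}" "finite t" "t \<subseteq> M" "\<Inter>t \<subseteq> {x. Q x}" by blast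
    then show "\<exists>s. finite s \<and> s \<subseteq> M \<and> \<Inter>s \<subseteq> {x. P x \<and> Q x}"
      by (intro exI[of _ "s \<union> t"]) auto
  next
    fix P Q assume "\<forall>x. P x \<longrightarrow> Q x" "\<exists>s. finite s \<and> s \<subseteq> M \<and> \<Inter>s \<subseteq> {x. P x}"
    then show "\<exists>s. finite s \<and> s \<subseteq> M \<and> \<Inter>s \<subseteq> {x. Q x}" by blast
  qed
  have ev: "eventually P D \<longleftrightarrow> (\<exists>s. finite s \<and> s \<subseteq> M \<and> \<Inter>s \<subseteq> {x. P x})" for P
    unfolding D_def by (rule eventually_Abs_filter[OF isf])
  have "D \<noteq> bot"
  proof
    assume "D = bot"
    then have "eventually (\<lambda>x. False) D" by simp
    then show False using M(2) by (auto simp: ev fip_def)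
  qed
  moreover have "eventually P D \<or> eventually (\<lambda>x. \<not> P x) D" for P
  proof -
    have "{x. P x} \<in> M \<or> -{x. P x} \<in> M" by (rule ultra)
    then show ?thesis unfolding ev
      by (elim disjE) (rule disjI1, rule exI[of _ "{{x. P x}}"], simp,
                       rule disjI2, rule exI[of _ "{-{x. P x}}"], auto)
  qed
  moreover have "\<forall>X\<in>S. eventually (\<lambda>x. x \<in> X) D"
    using M(1) by (auto simp: ev intro!: exI[of _ "{_}"])
  ultimately show ?thesis by blast
qed

primrec A :: "'i filter \<Rightarrow> nat \<Rightarrow> ((nat \<Rightarrow> 'i) \<Rightarrow> bool) \<Rightarrow> bool" where
  "A D 0 P = P (\<lambda>_. undefined)"
| "A D (Suc n) P = eventually (\<lambda>j. A D n (\<lambda>\<sigma>. P (\<sigma>(n := j)))) D"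

definition dep :: "nat \<Rightarrow> ((nat \<Rightarrow> 'i) \<Rightarrow> 'x) \<Rightarrow> bool" where
  "dep n X \<longleftrightarrow> (\<forall>\<sigma> \<sigma>'. (\<forall>k<n. \<sigma> k = \<sigma>' k) \<longrightarrow> X \<sigma> = X \<sigma>')"

definition findep :: "((nat \<Rightarrow> 'i) \<Rightarrow> 'x) \<Rightarrow> bool" where
  "findep X \<longleftrightarrow> (\<exists>n. dep n X)"

lemma dep_mono: "dep n X \<Longrightarrow> n \<le> m \<Longrightarrow> dep m X"
  unfolding dep_def by auto

lemma dep_comp: "dep n X \<Longrightarrow> dep n (\<lambda>\<sigma>. g (X \<sigma>))"
  unfolding dep_def
proof (intro allI impI)
  fix \<sigma> \<sigma>' :: "nat \<Rightarrow> 'a"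
  assume "\<forall>\<sigma> \<sigma>'. (\<forall>k<n. \<sigma> k = \<sigma>' k) \<longrightarrow> X \<sigma> = X \<sigma>'" "\<forall>k<n. \<sigma> k = \<sigma>' k"
  then have "X \<sigma> = X \<sigma>'" by blast
  then show "g (X \<sigma>) = g (X \<sigma>')" by simp
qed

lemma dep_comp2: "dep n X \<Longrightarrow> dep n Y \<Longrightarrow> dep n (\<lambda>\<sigma>. g (X \<sigma>) (Y \<sigma>))"
  unfolding dep_def
proof (intro allI impI)
  fix \<sigma> \<sigma>' :: "nat \<Rightarrow> 'a"
  assume "\<forall>\<sigma> \<sigma>'. (\<forall>k<n. \<sigma> k = \<sigma>' k) \<longrightarrow> X \<sigma> = X \<sigma>'"
    "\<forall>\<sigma> \<sigma>'. (\<forall>k<n. \<sigma> k = \<sigma>' k) \<longrightarrow> Y \<sigma> = Y \<sigma>'" "\<forall>k<n. \<sigma> k = \<sigma>' k"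
  then have "X \<sigma> = X \<sigma>'" "Y \<sigma> = Y \<sigma>'" by blast+
  then show "g (X \<sigma>) (Y \<sigma>) = g (X \<sigma>') (Y \<sigma>')" by simp
qed

lemma dep_const: "dep n (\<lambda>\<sigma>. c)"
  unfolding dep_def by simp

lemma dep_max: "dep n X \<Longrightarrow> dep (max n m) X" "dep m X \<Longrightarrow> dep (max n m) X"
  by (erule dep_mono, simp)+

lemma findep_comp: "findep X \<Longrightarrow> findep (\<lambda>\<sigma>. g (X \<sigma>))"
  unfolding findep_def using dep_comp by blast

lemma findep_comp2: "findep X \<Longrightarrow> findep Y \<Longrightarrow> findep (\<lambda>\<sigma>. g (X \<sigma>) (Y \<sigma>))"
proof -
  assume "findep X" "findep Y"
  then obtain n m where "dep n X" "dep m Y" by (auto simp: findep_def)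
  then have "dep (max n m) X" "dep (max n m) Y" by (simp_all add: dep_max)
  then have "dep (max n m) (\<lambda>\<sigma>. g (X \<sigma>) (Y \<sigma>))" by (rule dep_comp2)
  then show ?thesis unfolding findep_def by blast
qed

lemma findep_const: "findep (\<lambda>\<sigma>. c)"
  unfolding findep_def by (rule exI[of _ 0]) (simp add: dep_def)

lemma dep_upd: "dep n X \<Longrightarrow> n \<le> m \<Longrightarrow> X (\<sigma>(m := j)) = X \<sigma>"
  unfolding dep_def by auto

lemma findep_common:
  assumes "finite Z" "\<And>z. z \<in> Z \<Longrightarrow> findep (H z)"
  shows "\<exists>n. \<forall>z\<in>Z. dep n (H z)"
  using assms
proof (induction Z rule: finite_induct)
  case empty then show ?case by simp
next
  case (insert z Z)
  then obtain n where n: "\<forall>z\<in>Z. dep n (H z)" by auto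
  obtain m where m: "dep m (H z)" using insert.prems by (auto simp: findep_def)
  have "\<forall>z'\<in>insert z Z. dep (max n m) (H z')"
    using n m by (auto intro: dep_max)
  then show ?case by blast
qed

locale uf =
  fixes D :: "'i filter"
  assumes proper: "D \<noteq> bot"
    and ultra: "eventually P D \<or> eventually (\<lambda>x. \<not> P x) D"
begin

lemma ev_const: "eventually (\<lambda>x. c) D \<longleftrightarrow> c"
  using proper by (simp add: eventually_const_iff)

lemma ev_not: "eventually (\<lambda>x. \<not> P x) D \<longleftrightarrow> \<not> eventually P D"
proof
  assume a: "eventually (\<lambda>x. \<not> P x) D"
  show "\<not> eventually P D"
  proof
    assume "eventually P D"
    with a have "eventually (\<lambda>x. False) D" by (auto elim: eventually_elim2)
    then show False using ev_const by simp
  qed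
qed (use ultra in blast)

lemma A_conj: "A D n (\<lambda>\<sigma>. P \<sigma> \<and> Q \<sigma>) \<longleftrightarrow> A D n P \<and> A D n Q"
  by (induction n arbitrary: P Q) (simp_all add: eventually_conj_iff)

lemma A_not: "A D n (\<lambda>\<sigma>. \<not> P \<sigma>) \<longleftrightarrow> \<not> A D n P"
  by (induction n arbitrary: P) (simp_all add: ev_not)

lemma A_True: "A D n (\<lambda>\<sigma>. True)"
  by (induction n) simp_all

lemma A_mono: "A D n P \<Longrightarrow> (\<And>\<sigma>. P \<sigma> \<Longrightarrow> Q \<sigma>) \<Longrightarrow> A D n Q"
proof (induction n arbitrary: P Q)
  case 0 then show ?case by simp
next
  case (Suc n)
  show ?case using Suc.prems(1) unfolding A.simps
  proof (rule eventually_mono)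
    fix j assume "A D n (\<lambda>\<sigma>. P (\<sigma>(n := j)))"
    then show "A D n (\<lambda>\<sigma>. Q (\<sigma>(n := j)))"
      by (rule Suc.IH) (rule Suc.prems(2))
  qed
qed

lemma A_const: "A D n (\<lambda>\<sigma>. c) \<longleftrightarrow> c"
  by (induction n) (simp_all add: ev_const)

lemma A_Suc_dep: "dep n P \<Longrightarrow> A D (Suc n) P = A D n P"
proof -
  assume d: "dep n P"
  have "(\<lambda>\<sigma>. P (\<sigma>(n := j))) = P" for j using dep_upd[OF d] by auto
  then show ?thesis by (simp add: ev_const)
qed

lemma A_lift: "dep n P \<Longrightarrow> A D (n + k) P = A D n P"
proof (induction k)
  case (Suc k)
  have "dep (n + k) P" using Suc.prems by (rule dep_mono) simp
  then have "A D (Suc (n + k)) P = A D (n + k) P" by (rule A_Suc_dep)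
  then show ?case using Suc.IH[OF Suc.prems] by simp
qed simp

lemma A_indep: "dep n P \<Longrightarrow> dep m P \<Longrightarrow> A D n P = A D m P"
proof (cases "n \<le> m")
  case True
  assume d: "dep n P" "dep m P"
  have "A D (n + (m - n)) P = A D n P" by (rule A_lift[OF d(1)])
  then show ?thesis using True by simp
next
  case False
  assume d: "dep n P" "dep m P"
  have "A D (m + (n - m)) P = A D m P" by (rule A_lift[OF d(2)])
  then show ?thesis using False by simp
qed

definition AE :: "((nat \<Rightarrow> 'i) \<Rightarrow> bool) \<Rightarrow> bool" where
  "AE P \<longleftrightarrow> (\<exists>n. dep n P \<and> A D n P)"

lemma AE_iff: "dep n P \<Longrightarrow> AE P \<longleftrightarrow> A D n P"
  unfolding AE_def using A_indep by blast

lemma AE_conj: "findep P \<Longrightarrow> findep Q \<Longrightarrow> AE (\<lambda>\<sigma>. P \<sigma> \<and> Q \<sigma>) \<longleftrightarrow> AE P \<and> AE Q"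
proof -
  assume "findep P" "findep Q"
  then obtain n m where "dep n P" "dep m Q" by (auto simp: findep_def)
  then have d: "dep (max n m) P" "dep (max n m) Q" by (simp_all add: dep_max)
  then have "dep (max n m) (\<lambda>\<sigma>. P \<sigma> \<and> Q \<sigma>)" by (rule dep_comp2)
  then show ?thesis using d by (simp add: AE_iff A_conj)
qed

lemma AE_not: "findep P \<Longrightarrow> AE (\<lambda>\<sigma>. \<not> P \<sigma>) \<longleftrightarrow> \<not> AE P"
proof -
  assume "findep P"
  then obtain n where d: "dep n P" by (auto simp: findep_def)
  then have "dep n (\<lambda>\<sigma>. \<not> P \<sigma>)" by (rule dep_comp)
  then show ?thesis using d by (simp add: AE_iff A_not)
qed

lemma AE_mono: "AE P \<Longrightarrow> (\<And>\<sigma>. P \<sigma> \<Longrightarrow> Q \<sigma>) \<Longrightarrow> findep Q \<Longrightarrow> AE Q"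
proof -
  assume a: "AE P" "\<And>\<sigma>. P \<sigma> \<Longrightarrow> Q \<sigma>" "findep Q"
  then obtain n m where d: "dep n P" "A D n P" "dep m Q" by (auto simp: AE_def findep_def)
  then have "dep (max n m) P" "dep (max n m) Q" by (simp_all add: dep_max)
  moreover have "A D (max n m) P" using d A_indep calculation by blast
  ultimately show ?thesis using a(2) by (auto simp: AE_iff intro: A_mono)
qed

lemma AE_const: "AE (\<lambda>\<sigma>. c) \<longleftrightarrow> c"
  using AE_iff[OF dep_const[of 0]] by (simp add: A_const)

lemma AE_findep: "AE P \<Longrightarrow> findep P"
  unfolding AE_def findep_def by blast

lemma AE_mp: "AE P \<Longrightarrow> AE Q \<Longrightarrow> (\<And>\<sigma>. P \<sigma> \<Longrightarrow> Q \<sigma> \<Longrightarrow> R \<sigma>) \<Longrightarrow> findep R \<Longrightarrow> AE R"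
proof -
  assume a: "AE P" "AE Q" "\<And>\<sigma>. P \<sigma> \<Longrightarrow> Q \<sigma> \<Longrightarrow> R \<sigma>" "findep R"
  have "AE (\<lambda>\<sigma>. P \<sigma> \<and> Q \<sigma>)"
    using AE_conj[OF AE_findep[OF a(1)] AE_findep[OF a(2)]] a(1,2) by simp
  then show ?thesis by (rule AE_mono) (use a(3,4) in auto)
qed

end



locale constr = uf D for D :: "'a set set filter" +
  fixes F :: "'a nframe"
  assumes mon: "monotonic F"
    and ne: "pts F \<noteq> {}"
    and cone: "\<And>b. b \<subseteq> pts F \<Longrightarrow> eventually (\<lambda>j. finite j \<and> j \<subseteq> Pow (pts F) \<and> b \<in> j) D"
begin

abbreviation "W \<equiv> pts F"

definition dflt :: 'a where "dflt = (SOME x. x \<in> W)"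

lemma dflt: "dflt \<in> W"
  unfolding dflt_def using ne by (simp add: some_in_eq)

definition C :: "((nat \<Rightarrow> 'a set set) \<Rightarrow> 'a) set" where
  "C = {h. findep h \<and> (\<forall>\<sigma>. h \<sigma> \<in> W)}"

definition cls :: "((nat \<Rightarrow> 'a set set) \<Rightarrow> 'a) \<Rightarrow> ((nat \<Rightarrow> 'a set set) \<Rightarrow> 'a) set" where
  "cls h = {h' \<in> C. AE (\<lambda>\<sigma>. h \<sigma> = h' \<sigma>)}"

definition Gpts where "Gpts = cls ` C"

definition rep where "rep c = (SOME h. h \<in> c)"

definition ext where "ext E = {c \<in> Gpts. AE (\<lambda>\<sigma>. rep c \<sigma> \<in> E \<sigma>)}"

definition nbG where
  "nbG c = {X. X \<subseteq> Gpts \<and> (\<exists>E. findep E \<and> AE (\<lambda>\<sigma>. E \<sigma> \<in> nb F (rep c \<sigma>)) \<and> ext E \<subseteq> X)}"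

definition G0 where "G0 = (Gpts, nbG)"

definition fm where "fm c = {b. b \<subseteq> W \<and> AE (\<lambda>\<sigma>. rep c \<sigma> \<in> b)}"

lemma G0_pts: "pts G0 = Gpts" and G0_nb: "nb G0 = nbG"
  by (simp_all add: G0_def pts_def nb_def)

lemma nfF: "nframe F" using mon by (simp add: monotonic_def)

lemma nbF_sub: "w \<in> W \<Longrightarrow> X \<in> nb F w \<Longrightarrow> X \<subseteq> W"
  using nfF by (auto simp: nframe_def)

lemma monF: "w \<in> W \<Longrightarrow> X \<in> nb F w \<Longrightarrow> X \<subseteq> Y \<Longrightarrow> Y \<subseteq> W \<Longrightarrow> Y \<in> nb F w"
  using mon unfolding monotonic_def by blast

lemma C_findep: "h \<in> C \<Longrightarrow> findep h" by (simp add: C_def)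
lemma C_W: "h \<in> C \<Longrightarrow> h \<sigma> \<in> W" by (simp add: C_def)

lemma const_C: "x \<in> W \<Longrightarrow> (\<lambda>\<sigma>. x) \<in> C"
  by (simp add: C_def findep_const)

lemma AE_eq_findep: "h \<in> C \<Longrightarrow> h' \<in> C \<Longrightarrow> findep (\<lambda>\<sigma>. h \<sigma> = h' \<sigma>)"
  by (rule findep_comp2) (simp_all add: C_findep)

lemma cls_self: "h \<in> C \<Longrightarrow> h \<in> cls h"
  unfolding cls_def by (simp add: AE_const)

lemma AE_trans:
  assumes "h1 \<in> C" "h2 \<in> C" "h3 \<in> C" "AE (\<lambda>\<sigma>. h1 \<sigma> = h2 \<sigma>)" "AE (\<lambda>\<sigma>. h2 \<sigma> = h3 \<sigma>)"
  shows "AE (\<lambda>\<sigma>. h1 \<sigma> = h3 \<sigma>)"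
  by (rule AE_mp[OF assms(4,5)]) (simp_all add: AE_eq_findep assms(1,3))

lemma AE_sym:
  assumes "h1 \<in> C" "h2 \<in> C" "AE (\<lambda>\<sigma>. h1 \<sigma> = h2 \<sigma>)"
  shows "AE (\<lambda>\<sigma>. h2 \<sigma> = h1 \<sigma>)"
  by (rule AE_mono[OF assms(3)]) (simp_all add: AE_eq_findep assms(1,2))

lemma cls_eq:
  assumes "h \<in> C" "h' \<in> C"
  shows "cls h = cls h' \<longleftrightarrow> AE (\<lambda>\<sigma>. h \<sigma> = h' \<sigma>)"
proof
  assume "cls h = cls h'"
  then have "h' \<in> cls h" using cls_self[OF assms(2)] by simp
  then show "AE (\<lambda>\<sigma>. h \<sigma> = h' \<sigma>)" by (simp add: cls_def)
next
  assume e: "AE (\<lambda>\<sigma>. h \<sigma> = h' \<sigma>)"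
  have "h'' \<in> cls h \<longleftrightarrow> h'' \<in> cls h'" for h''
  proof (cases "h'' \<in> C")
    case True
    have "AE (\<lambda>\<sigma>. h \<sigma> = h'' \<sigma>) \<longleftrightarrow> AE (\<lambda>\<sigma>. h' \<sigma> = h'' \<sigma>)"
      using AE_trans[OF assms(2,1) True AE_sym[OF assms e]] AE_trans[OF assms True e] by blast
    then show ?thesis by (simp add: cls_def)
  qed (simp add: cls_def)
  then show "cls h = cls h'" by blast
qed

lemma rep_cls:
  assumes "h \<in> C"
  shows "rep (cls h) \<in> C" "AE (\<lambda>\<sigma>. h \<sigma> = rep (cls h) \<sigma>)"
proof -
  have "rep (cls h) \<in> cls h" unfolding rep_def using cls_self[OF assms] by (rule someI[where P="\<lambda>x. x \<in> cls h"])
  then show "rep (cls h) \<in> C" "AE (\<lambda>\<sigma>. h \<sigma> = rep (cls h) \<sigma>)" by (simp_all add: cls_def)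
qed

lemma Gpts_rep:
  assumes "c \<in> Gpts"
  shows "rep c \<in> C" "cls (rep c) = c"
proof -
  obtain h where h: "h \<in> C" "c = cls h" using assms by (auto simp: Gpts_def)
  show "rep c \<in> C" using rep_cls(1)[OF h(1)] h(2) by simp
  have "cls h = cls (rep (cls h))"
    using rep_cls[OF h(1)] cls_eq[OF h(1) rep_cls(1)[OF h(1)]] by simp
  then show "cls (rep c) = c" using h(2) by simp
qed

lemma cls_in: "h \<in> C \<Longrightarrow> cls h \<in> Gpts"
  by (simp add: Gpts_def)

lemma AE_subst:
  assumes "h \<in> C" "h' \<in> C" "AE (\<lambda>\<sigma>. h \<sigma> = h' \<sigma>)"
    and "findep Q"
  shows "AE (\<lambda>\<sigma>. Q \<sigma> (h \<sigma>)) \<longleftrightarrow> AE (\<lambda>\<sigma>. Q \<sigma> (h' \<sigma>))"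
proof -
  have f1: "findep (\<lambda>\<sigma>. Q \<sigma> (h \<sigma>))" by (rule findep_comp2[OF assms(4) C_findep[OF assms(1)], of "\<lambda>q x. q x"])
  have f2: "findep (\<lambda>\<sigma>. Q \<sigma> (h' \<sigma>))" by (rule findep_comp2[OF assms(4) C_findep[OF assms(2)], of "\<lambda>q x. q x"])
  show ?thesis
  proof
    assume "AE (\<lambda>\<sigma>. Q \<sigma> (h \<sigma>))"
    then show "AE (\<lambda>\<sigma>. Q \<sigma> (h' \<sigma>))" by (rule AE_mp[OF assms(3)]) (simp_all add: f2)
  next
    assume "AE (\<lambda>\<sigma>. Q \<sigma> (h' \<sigma>))"
    then show "AE (\<lambda>\<sigma>. Q \<sigma> (h \<sigma>))" by (rule AE_mp[OF assms(3)]) (simp_all add: f1)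
  qed
qed

lemma AE_subst_rep:
  assumes "h \<in> C" "findep Q"
  shows "AE (\<lambda>\<sigma>. Q \<sigma> (rep (cls h) \<sigma>)) \<longleftrightarrow> AE (\<lambda>\<sigma>. Q \<sigma> (h \<sigma>))"
  using AE_subst[OF assms(1) rep_cls(1)[OF assms(1)] rep_cls(2)[OF assms(1)] assms(2)] by simp

lemma ext_mem:
  assumes "h \<in> C" "findep E"
  shows "cls h \<in> ext E \<longleftrightarrow> AE (\<lambda>\<sigma>. h \<sigma> \<in> E \<sigma>)"
proof -
  have "findep (\<lambda>\<sigma>. \<lambda>x. x \<in> E \<sigma>)" using assms(2) by (rule findep_comp)
  from AE_subst_rep[OF assms(1) this] show ?thesis
    by (simp add: ext_def cls_in[OF assms(1)])
qed

lemma choose: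
  assumes "findep Q"
  shows "\<exists>h\<in>C. \<forall>\<sigma>. (\<exists>v\<in>W. Q \<sigma> v) \<longrightarrow> Q \<sigma> (h \<sigma>)"
proof -
  define g where "g R = (if \<exists>v\<in>W. R v then SOME v. v \<in> W \<and> R v else dflt)" for R
  define h where "h \<sigma> = g (Q \<sigma>)" for \<sigma>
  have "findep h" unfolding h_def using assms by (rule findep_comp)
  moreover have "h \<sigma> \<in> W" for \<sigma>
  proof (cases "\<exists>v\<in>W. Q \<sigma> v")
    case True
    then have "\<exists>v. v \<in> W \<and> Q \<sigma> v" by blast
    from someI_ex[OF this] show ?thesis unfolding h_def g_def using True by simp
  qed (simp add: h_def g_def dflt)
  moreover have "(\<exists>v\<in>W. Q \<sigma> v) \<longrightarrow> Q \<sigma> (h \<sigma>)" for \<sigma>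
  proof
    assume True: "\<exists>v\<in>W. Q \<sigma> v"
    then have "\<exists>v. v \<in> W \<and> Q \<sigma> v" by blast
    from someI_ex[OF this] show "Q \<sigma> (h \<sigma>)" unfolding h_def g_def using True by simp
  qed
  ultimately show ?thesis unfolding C_def by blast
qed

lemma incl:
  assumes E: "findep E" and E': "findep E'" and sub: "ext E \<subseteq> ext E'"
  shows "AE (\<lambda>\<sigma>. E \<sigma> \<inter> W \<subseteq> E' \<sigma>)"
proof (rule ccontr)
  have fd: "findep (\<lambda>\<sigma>. E \<sigma> \<inter> W \<subseteq> E' \<sigma>)" using E E' by (rule findep_comp2)
  assume "\<not> AE (\<lambda>\<sigma>. E \<sigma> \<inter> W \<subseteq> E' \<sigma>)"
  then have n: "AE (\<lambda>\<sigma>. \<not> (E \<sigma> \<inter> W \<subseteq> E' \<sigma>))" using AE_not[OF fd] by simp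
  have fq: "findep (\<lambda>\<sigma>. \<lambda>v. v \<in> E \<sigma> \<and> v \<notin> E' \<sigma>)" using E E' by (rule findep_comp2)
  obtain h where h: "h \<in> C" and hq: "\<And>\<sigma>. (\<exists>v\<in>W. v \<in> E \<sigma> \<and> v \<notin> E' \<sigma>) \<longrightarrow> h \<sigma> \<in> E \<sigma> \<and> h \<sigma> \<notin> E' \<sigma>"
    using choose[OF fq] by blast
  have fh1: "findep (\<lambda>\<sigma>. h \<sigma> \<in> E \<sigma>)" by (rule findep_comp2[OF C_findep[OF h] E])
  have fh2: "findep (\<lambda>\<sigma>. h \<sigma> \<in> E' \<sigma>)" by (rule findep_comp2[OF C_findep[OF h] E'])
  have fh3: "findep (\<lambda>\<sigma>. h \<sigma> \<notin> E' \<sigma>)" using fh2 by (rule findep_comp)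
  have a1: "AE (\<lambda>\<sigma>. h \<sigma> \<in> E \<sigma>)" by (rule AE_mono[OF n]) (use hq fh1 in blast)+
  have a2: "AE (\<lambda>\<sigma>. h \<sigma> \<notin> E' \<sigma>)" by (rule AE_mono[OF n]) (use hq fh3 in blast)+
  have "cls h \<in> ext E" using ext_mem[OF h E] a1 by simp
  then have "cls h \<in> ext E'" using sub by blast
  then have "AE (\<lambda>\<sigma>. h \<sigma> \<in> E' \<sigma>)" using ext_mem[OF h E'] by simp
  then show False using a2 AE_not[OF fh2] by simp
qed

end



context constr begin

lemma sat_findep:
  assumes H: "\<And>z. H z \<in> C"
  shows "findep (\<lambda>\<sigma>. sat F (\<lambda>z. H z \<sigma>) p)"
proof -
  obtain n where n: "\<forall>z\<in>fv p. dep n (H z)"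
    using findep_common[OF finite_fv, of p H] C_findep[OF H] by blast
  have "dep n (\<lambda>\<sigma>. sat F (\<lambda>z. H z \<sigma>) p)" unfolding dep_def
  proof (intro allI impI)
    fix \<sigma> \<sigma>' :: "nat \<Rightarrow> 'a set set" assume a: "\<forall>k<n. \<sigma> k = \<sigma>' k"
    have "\<forall>z\<in>fv p. H z \<sigma> = H z \<sigma>'" using n a unfolding dep_def by blast
    then show "sat F (\<lambda>z. H z \<sigma>) p = sat F (\<lambda>z. H z \<sigma>') p" by (rule sat_fv)
  qed
  then show ?thesis unfolding findep_def by blast
qed

lemma sat_upd_findep:
  assumes H: "\<And>z. H z \<in> C"
  shows "findep (\<lambda>\<sigma>. \<lambda>v. sat F ((\<lambda>z. H z \<sigma>)(x := v)) p)"
proof -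
  obtain n where n: "\<forall>z\<in>fv p. dep n (H z)"
    using findep_common[OF finite_fv, of p H] C_findep[OF H] by blast
  have "dep n (\<lambda>\<sigma>. \<lambda>v. sat F ((\<lambda>z. H z \<sigma>)(x := v)) p)" unfolding dep_def
  proof (intro allI impI)
    fix \<sigma> \<sigma>' :: "nat \<Rightarrow> 'a set set" assume a: "\<forall>k<n. \<sigma> k = \<sigma>' k"
    have "\<forall>z\<in>fv p. H z \<sigma> = H z \<sigma>'" using n a unfolding dep_def by blast
    then have "\<forall>z\<in>fv p. ((\<lambda>z. H z \<sigma>)(x := v)) z = ((\<lambda>z. H z \<sigma>')(x := v)) z" for v by simp
    then have "sat F ((\<lambda>z. H z \<sigma>)(x := v)) p = sat F ((\<lambda>z. H z \<sigma>')(x := v)) p" for v by (rule sat_fv)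
    then show "(\<lambda>v. sat F ((\<lambda>z. H z \<sigma>)(x := v)) p) = (\<lambda>v. sat F ((\<lambda>z. H z \<sigma>')(x := v)) p)" by blast
  qed
  then show ?thesis unfolding findep_def by blast
qed

lemma nbG_ext:
  assumes h: "h \<in> C" and E: "findep E" and EW: "\<And>\<sigma>. E \<sigma> \<subseteq> W"
  shows "ext E \<in> nbG (cls h) \<longleftrightarrow> AE (\<lambda>\<sigma>. E \<sigma> \<in> nb F (h \<sigma>))"
proof -
  have fQ: "findep (\<lambda>\<sigma>. \<lambda>w. E \<sigma> \<in> nb F w)" using E by (rule findep_comp)
  have sub: "AE (\<lambda>\<sigma>. E \<sigma> \<in> nb F (rep (cls h) \<sigma>)) \<longleftrightarrow> AE (\<lambda>\<sigma>. E \<sigma> \<in> nb F (h \<sigma>))"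
    using AE_subst_rep[OF h fQ] by simp
  have extsub: "ext E \<subseteq> Gpts" by (auto simp: ext_def)
  show ?thesis
  proof
    assume "ext E \<in> nbG (cls h)"
    then obtain E' where E': "findep E'" "AE (\<lambda>\<sigma>. E' \<sigma> \<in> nb F (rep (cls h) \<sigma>))" "ext E' \<subseteq> ext E"
      by (auto simp: nbG_def)
    have i: "AE (\<lambda>\<sigma>. E' \<sigma> \<inter> W \<subseteq> E \<sigma>)" by (rule incl[OF E'(1) E E'(3)])
    have r: "rep (cls h) \<in> C" by (rule rep_cls(1)[OF h])
    have fr: "findep (\<lambda>\<sigma>. E \<sigma> \<in> nb F (rep (cls h) \<sigma>))"
      by (rule findep_comp2[OF E C_findep[OF r]])
    have "AE (\<lambda>\<sigma>. E \<sigma> \<in> nb F (rep (cls h) \<sigma>))"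
    proof (rule AE_mp[OF E'(2) i _ fr])
      fix \<sigma> assume a: "E' \<sigma> \<in> nb F (rep (cls h) \<sigma>)" "E' \<sigma> \<inter> W \<subseteq> E \<sigma>"
      have rw: "rep (cls h) \<sigma> \<in> W" by (rule C_W[OF r])
      have "E' \<sigma> \<subseteq> W" by (rule nbF_sub[OF rw a(1)])
      then have "E' \<sigma> \<subseteq> E \<sigma>" using a(2) by blast
      then show "E \<sigma> \<in> nb F (rep (cls h) \<sigma>)" using monF[OF rw a(1) _ EW] by blast
    qed
    then show "AE (\<lambda>\<sigma>. E \<sigma> \<in> nb F (h \<sigma>))" using sub by simp
  next
    assume "AE (\<lambda>\<sigma>. E \<sigma> \<in> nb F (h \<sigma>))"
    then have "AE (\<lambda>\<sigma>. E \<sigma> \<in> nb F (rep (cls h) \<sigma>))" using sub by simp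
    then show "ext E \<in> nbG (cls h)" unfolding nbG_def using E extsub by blast
  qed
qed

lemma upd_cls: "(\<lambda>z. cls (H z))(x := cls h') = (\<lambda>z. cls ((H(x := h')) z))"
  by (rule ext) simp

lemma upd_app: "(\<lambda>z. (H(x := h')) z \<sigma>) = (\<lambda>z. H z \<sigma>)(x := h' \<sigma>)"
  by (rule ext) simp

lemma los:
  "(\<And>z. H z \<in> C) \<Longrightarrow> sat G0 (\<lambda>z. cls (H z)) p \<longleftrightarrow> AE (\<lambda>\<sigma>. sat F (\<lambda>z. H z \<sigma>) p)"
proof (induction p arbitrary: H)
  case (Eq x y)
  show ?case using cls_eq[OF Eq(1)[of x] Eq(1)[of y]] by simp
next
  case (Neg p)
  show ?case using Neg.IH[OF Neg.prems] AE_not[OF sat_findep[OF Neg.prems, where p=p]] by simp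
next
  case (Conj p q)
  show ?case using Conj.IH(1)[OF Conj.prems] Conj.IH(2)[OF Conj.prems]
      AE_conj[OF sat_findep[OF Conj.prems, where p=p] sat_findep[OF Conj.prems, where p=q]] by simp
next
  case (Ex x p)
  have HC: "\<And>z. H z \<in> C" by (rule Ex.prems)
  have IH': "sat G0 (\<lambda>z. cls ((H(x := h')) z)) p \<longleftrightarrow> AE (\<lambda>\<sigma>. sat F ((\<lambda>z. H z \<sigma>)(x := h' \<sigma>)) p)"
    if h': "h' \<in> C" for h'
  proof -
    have "\<And>z. (H(x := h')) z \<in> C" using HC h' by simp
    from Ex.IH[OF this] show ?thesis by (simp only: upd_app)
  qed
  have fQ: "findep (\<lambda>\<sigma>. \<lambda>v. sat F ((\<lambda>z. H z \<sigma>)(x := v)) p)" by (rule sat_upd_findep[OF HC])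
  have fE: "findep (\<lambda>\<sigma>. sat F (\<lambda>z. H z \<sigma>) (Ex x p))" by (rule sat_findep[OF HC])
  show ?case
  proof
    assume "sat G0 (\<lambda>z. cls (H z)) (Ex x p)"
    then obtain c where c: "c \<in> Gpts" "sat G0 ((\<lambda>z. cls (H z))(x := c)) p"
      by (auto simp: G0_pts)
    obtain h' where h': "h' \<in> C" "c = cls h'" using c(1) by (auto simp: Gpts_def)
    have "AE (\<lambda>\<sigma>. sat F ((\<lambda>z. H z \<sigma>)(x := h' \<sigma>)) p)"
      using c(2) h' IH'[OF h'(1)] by (simp add: upd_cls)
    then show "AE (\<lambda>\<sigma>. sat F (\<lambda>z. H z \<sigma>) (Ex x p))"
    proof (rule AE_mono)
      fix \<sigma> assume "sat F ((\<lambda>z. H z \<sigma>)(x := h' \<sigma>)) p"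
      then show "sat F (\<lambda>z. H z \<sigma>) (Ex x p)" using C_W[OF h'(1)] by auto
    qed (rule fE)
  next
    assume a: "AE (\<lambda>\<sigma>. sat F (\<lambda>z. H z \<sigma>) (Ex x p))"
    obtain h' where h': "h' \<in> C" and hq: "\<And>\<sigma>. (\<exists>v\<in>W. sat F ((\<lambda>z. H z \<sigma>)(x := v)) p) \<longrightarrow> sat F ((\<lambda>z. H z \<sigma>)(x := h' \<sigma>)) p"
      using choose[OF fQ] by blast
    have fh: "findep (\<lambda>\<sigma>. sat F ((\<lambda>z. H z \<sigma>)(x := h' \<sigma>)) p)"
      by (rule findep_comp2[OF fQ C_findep[OF h'], of "\<lambda>q v. q v"])
    have "AE (\<lambda>\<sigma>. sat F ((\<lambda>z. H z \<sigma>)(x := h' \<sigma>)) p)"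
    proof (rule AE_mono[OF a])
      fix \<sigma> assume "sat F (\<lambda>z. H z \<sigma>) (Ex x p)"
      then show "sat F ((\<lambda>z. H z \<sigma>)(x := h' \<sigma>)) p" using hq by simp
    qed (rule fh)
    then have "sat G0 (\<lambda>z. cls ((H(x := h')) z)) p" using IH'[OF h'] by simp
    then have "sat G0 ((\<lambda>z. cls (H z))(x := cls h')) p" by (simp only: upd_cls)
    then show "sat G0 (\<lambda>z. cls (H z)) (Ex x p)" using cls_in[OF h'] by (auto simp: G0_pts)
  qed
next
  case (Box x y p)
  have HC: "\<And>z. H z \<in> C" by (rule Box.prems)
  define Ext where "Ext \<sigma> = {v \<in> W. sat F ((\<lambda>z. H z \<sigma>)(y := v)) p}" for \<sigma>
  have fQ: "findep (\<lambda>\<sigma>. \<lambda>v. sat F ((\<lambda>z. H z \<sigma>)(y := v)) p)" by (rule sat_upd_findep[OF HC])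
  have fExt: "findep Ext" unfolding Ext_def using fQ by (rule findep_comp)
  have IH': "sat G0 (\<lambda>z. cls ((H(y := h')) z)) p \<longleftrightarrow> AE (\<lambda>\<sigma>. sat F ((\<lambda>z. H z \<sigma>)(y := h' \<sigma>)) p)"
    if h': "h' \<in> C" for h'
  proof -
    have "\<And>z. (H(y := h')) z \<in> C" using HC h' by simp
    from Box.IH[OF this] show ?thesis by (simp only: upd_app)
  qed
  have seteq: "{v \<in> pts G0. sat G0 ((\<lambda>z. cls (H z))(y := v)) p} = ext Ext"
  proof (intro set_eqI iffI)
    fix c assume "c \<in> {v \<in> pts G0. sat G0 ((\<lambda>z. cls (H z))(y := v)) p}"
    then have c: "c \<in> Gpts" "sat G0 ((\<lambda>z. cls (H z))(y := c)) p" by (simp_all add: G0_pts)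
    obtain h' where h': "h' \<in> C" "c = cls h'" using c(1) by (auto simp: Gpts_def)
    have a1: "AE (\<lambda>\<sigma>. sat F ((\<lambda>z. H z \<sigma>)(y := h' \<sigma>)) p)"
      using c(2) h' IH'[OF h'(1)] by (simp add: upd_cls)
    have f1: "findep (\<lambda>\<sigma>. h' \<sigma> \<in> Ext \<sigma>)" by (rule findep_comp2[OF C_findep[OF h'(1)] fExt])
    have "AE (\<lambda>\<sigma>. h' \<sigma> \<in> Ext \<sigma>)"
      by (rule AE_mono[OF a1 _ f1]) (simp add: Ext_def C_W[OF h'(1)])
    then show "c \<in> ext Ext" using ext_mem[OF h'(1) fExt] h'(2) by simp
  next
    fix c assume c: "c \<in> ext Ext"
    then have cG: "c \<in> Gpts" by (simp add: ext_def)
    obtain h' where h': "h' \<in> C" "c = cls h'" using cG by (auto simp: Gpts_def)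
    have a1: "AE (\<lambda>\<sigma>. h' \<sigma> \<in> Ext \<sigma>)" using ext_mem[OF h'(1) fExt] c h'(2) by simp
    have f1: "findep (\<lambda>\<sigma>. sat F ((\<lambda>z. H z \<sigma>)(y := h' \<sigma>)) p)"
      by (rule findep_comp2[OF fQ C_findep[OF h'(1)], of "\<lambda>q v. q v"])
    have "AE (\<lambda>\<sigma>. sat F ((\<lambda>z. H z \<sigma>)(y := h' \<sigma>)) p)"
      by (rule AE_mono[OF a1 _ f1]) (simp add: Ext_def)
    then have "sat G0 (\<lambda>z. cls ((H(y := h')) z)) p" using IH'[OF h'(1)] by simp
    then have "sat G0 ((\<lambda>z. cls (H z))(y := c)) p" using h'(2) by (simp only: upd_cls)
    then show "c \<in> {v \<in> pts G0. sat G0 ((\<lambda>z. cls (H z))(y := v)) p}" using cG by (simp add: G0_pts)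
  qed
  have "sat G0 (\<lambda>z. cls (H z)) (Box x y p) \<longleftrightarrow> ext Ext \<in> nbG (cls (H x))"
    using seteq by (simp add: G0_nb)
  also have "\<dots> \<longleftrightarrow> AE (\<lambda>\<sigma>. Ext \<sigma> \<in> nb F (H x \<sigma>))"
    by (rule nbG_ext[OF HC fExt]) (simp add: Ext_def)
  also have "\<dots> \<longleftrightarrow> AE (\<lambda>\<sigma>. sat F (\<lambda>z. H z \<sigma>) (Box x y p))"
    by (simp add: Ext_def)
  finally show ?case .
qed

lemma Th_G0: "Th G0 = Th F"
proof -
  have "holds G0 p = holds F p" if s: "sentence p" for p
  proof -
    define H :: "nat \<Rightarrow> (nat \<Rightarrow> 'a set set) \<Rightarrow> 'a" where "H = (\<lambda>z \<sigma>. dflt)"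
    have HC: "\<And>z. H z \<in> C" unfolding H_def by (rule const_C[OF dflt])
    have "holds G0 p \<longleftrightarrow> sat G0 (\<lambda>z. cls (H z)) p" by (rule holds_sentence[OF s])
    also have "\<dots> \<longleftrightarrow> AE (\<lambda>\<sigma>. sat F (\<lambda>z. H z \<sigma>) p)" by (rule los[OF HC])
    also have "\<dots> \<longleftrightarrow> sat F (\<lambda>z. dflt) p" by (simp add: H_def AE_const)
    also have "\<dots> \<longleftrightarrow> holds F p" by (rule holds_sentence[OF s, symmetric])
    finally show ?thesis .
  qed
  then show ?thesis unfolding Th_def by auto
qed

lemma mon_G0: "monotonic G0"
  unfolding monotonic_def nframe_def G0_pts G0_nb
proof (intro conjI ballI allI impI)
  fix c assume "c \<in> Gpts"
  show "nbG c \<subseteq> Pow Gpts" by (auto simp: nbG_def)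
next
  fix c X Y assume "c \<in> Gpts" "X \<in> nbG c \<and> X \<subseteq> Y \<and> Y \<subseteq> Gpts"
  then show "Y \<in> nbG c" unfolding nbG_def by blast
qed

lemma qf_G0:
  assumes qf: "quasi_filter F"
  shows "quasi_filter G0"
  unfolding quasi_filter_def
proof (intro conjI ballI allI impI)
  show "monotonic G0" by (rule mon_G0)
  fix c S assume c: "c \<in> pts G0" and S: "finite S \<and> S \<noteq> {} \<and> S \<subseteq> nb G0 c"
  have cG: "c \<in> Gpts" using c by (simp add: G0_pts)
  have r: "rep c \<in> C" by (rule Gpts_rep(1)[OF cG])
  have two: "X \<inter> Y \<in> nbG c" if "X \<in> nbG c" "Y \<in> nbG c" for X Y
  proof -
    have X: "X \<subseteq> Gpts \<and> (\<exists>E. findep E \<and> AE (\<lambda>\<sigma>. E \<sigma> \<in> nb F (rep c \<sigma>)) \<and> ext E \<subseteq> X)"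
      using that(1) by (simp add: nbG_def)
    then obtain E1 where E1: "findep E1" "AE (\<lambda>\<sigma>. E1 \<sigma> \<in> nb F (rep c \<sigma>))" "ext E1 \<subseteq> X" "X \<subseteq> Gpts"
      by blast
    have Y: "Y \<subseteq> Gpts \<and> (\<exists>E. findep E \<and> AE (\<lambda>\<sigma>. E \<sigma> \<in> nb F (rep c \<sigma>)) \<and> ext E \<subseteq> Y)"
      using that(2) by (simp add: nbG_def)
    then obtain E2 where E2: "findep E2" "AE (\<lambda>\<sigma>. E2 \<sigma> \<in> nb F (rep c \<sigma>))" "ext E2 \<subseteq> Y"
      by blast
    have fE: "findep (\<lambda>\<sigma>. E1 \<sigma> \<inter> E2 \<sigma>)" using E1(1) E2(1) by (rule findep_comp2)
    have fN: "findep (\<lambda>\<sigma>. E1 \<sigma> \<inter> E2 \<sigma> \<in> nb F (rep c \<sigma>))"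
      by (rule findep_comp2[OF fE C_findep[OF r]])
    have "AE (\<lambda>\<sigma>. E1 \<sigma> \<inter> E2 \<sigma> \<in> nb F (rep c \<sigma>))"
    proof (rule AE_mp[OF E1(2) E2(2) _ fN])
      fix \<sigma> assume a: "E1 \<sigma> \<in> nb F (rep c \<sigma>)" "E2 \<sigma> \<in> nb F (rep c \<sigma>)"
      have "\<Inter>{E1 \<sigma>, E2 \<sigma>} \<in> nb F (rep c \<sigma>)"
        using qf C_W[OF r] a unfolding quasi_filter_def by (metis empty_not_insert empty_subsetI finite.emptyI finite.insertI insert_subset)
      then show "E1 \<sigma> \<inter> E2 \<sigma> \<in> nb F (rep c \<sigma>)" by simp
    qed
    moreover have "ext (\<lambda>\<sigma>. E1 \<sigma> \<inter> E2 \<sigma>) \<subseteq> X \<inter> Y"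
    proof
      fix d assume d: "d \<in> ext (\<lambda>\<sigma>. E1 \<sigma> \<inter> E2 \<sigma>)"
      then have dG: "d \<in> Gpts" by (simp add: ext_def)
      have rd: "rep d \<in> C" by (rule Gpts_rep(1)[OF dG])
      have a: "AE (\<lambda>\<sigma>. rep d \<sigma> \<in> E1 \<sigma> \<inter> E2 \<sigma>)" using d by (simp add: ext_def)
      have "AE (\<lambda>\<sigma>. rep d \<sigma> \<in> E1 \<sigma>)"
        by (rule AE_mono[OF a]) (simp_all add: findep_comp2[OF C_findep[OF rd] E1(1)])
      then have "d \<in> ext E1" using dG by (simp add: ext_def)
      moreover have "AE (\<lambda>\<sigma>. rep d \<sigma> \<in> E2 \<sigma>)"
        by (rule AE_mono[OF a]) (simp_all add: findep_comp2[OF C_findep[OF rd] E2(1)])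
      then have "d \<in> ext E2" using dG by (simp add: ext_def)
      ultimately show "d \<in> X \<inter> Y" using E1(3) E2(3) by blast
    qed
    moreover have "X \<inter> Y \<subseteq> Gpts" using E1(4) by blast
    ultimately show ?thesis unfolding nbG_def using fE by blast
  qed
  have "finite S \<Longrightarrow> S \<noteq> {} \<Longrightarrow> S \<subseteq> nbG c \<Longrightarrow> \<Inter>S \<in> nbG c"
  proof (induction S rule: finite_ne_induct)
    case (singleton X) then show ?case by simp
  next
    case (insert X S)
    then have "\<Inter>S \<in> nbG c" "X \<in> nbG c" by auto
    then show ?case using two by simp
  qed
  then show "\<Inter>S \<in> nb G0 c" using S by (simp add: G0_nb)
qed

end



lemma uf_inter:
  assumes u: "ultrafilter_on W u" and s: "finite s" "s \<subseteq> u"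
  shows "\<Inter>s \<inter> W \<in> u"
  using s
proof (induction s rule: finite_induct)
  case empty then show ?case using u by (simp add: ultrafilter_on_def)
next
  case (insert a s)
  then have "a \<in> u" "\<Inter>s \<inter> W \<in> u" by auto
  then have "a \<inter> (\<Inter>s \<inter> W) \<in> u" using u unfolding ultrafilter_on_def by blast
  moreover have "a \<inter> (\<Inter>s \<inter> W) = \<Inter>(insert a s) \<inter> W" by auto
  ultimately show ?case by simp
qed

lemma uf_compl:
  assumes u: "ultrafilter_on W u" and "b \<in> u" "W - b \<in> u"
  shows False
proof -
  have "b \<inter> (W - b) \<in> u" using u assms(2,3) unfolding ultrafilter_on_def by blast
  then show False using u by (simp add: ultrafilter_on_def)
qed

lemma uf_sub_eq:
  assumes u: "ultrafilter_on W u" and u': "ultrafilter_on W u'" and sub: "u \<subseteq> u'"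
  shows "u = u'"
proof
  show "u' \<subseteq> u"
  proof
    fix b assume b: "b \<in> u'"
    then have bW: "b \<subseteq> W" using u' by (auto simp: ultrafilter_on_def)
    show "b \<in> u"
    proof (rule ccontr)
      assume "b \<notin> u"
      then have "W - b \<in> u" using u bW unfolding ultrafilter_on_def by blast
      then show False using uf_compl[OF u' b] sub by blast
    qed
  qed
qed (rule sub)

lemma ue_pts: "pts (ue F) = Uf (pts F)" by (simp add: ue_def pts_def)
lemma ue_nb: "nb (ue F) u = {U. U \<subseteq> Uf (pts F) \<and>
            (\<exists>K. closed_uf (pts F) K \<and> K \<subseteq> U \<and>
                 (\<forall>a. a \<subseteq> pts F \<longrightarrow> K \<subseteq> basic (pts F) a \<longrightarrow> cbox F a \<in> u))}"
  by (simp add: ue_def nb_def)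

context constr begin

lemma fm_cls:
  assumes h: "h \<in> C"
  shows "fm (cls h) = {b. b \<subseteq> W \<and> AE (\<lambda>\<sigma>. h \<sigma> \<in> b)}"
proof -
  have "AE (\<lambda>\<sigma>. rep (cls h) \<sigma> \<in> b) \<longleftrightarrow> AE (\<lambda>\<sigma>. h \<sigma> \<in> b)" for b
    using AE_subst_rep[OF h findep_const[of "\<lambda>x. x \<in> b"]] by simp
  then show ?thesis by (simp add: fm_def)
qed

lemma findep_mem: "h \<in> C \<Longrightarrow> findep (\<lambda>\<sigma>. h \<sigma> \<in> b)"
  by (rule findep_comp[OF C_findep])

lemma fm_Uf:
  assumes h: "h \<in> C"
  shows "fm (cls h) \<in> Uf W"
proof -
  have "ultrafilter_on W (fm (cls h))"
  unfolding ultrafilter_on_def fm_cls[OF h]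
proof (intro conjI ballI allI impI)
  show "{b. b \<subseteq> W \<and> AE (\<lambda>\<sigma>. h \<sigma> \<in> b)} \<subseteq> Pow W" by blast
  have e: "(\<lambda>\<sigma>. h \<sigma> \<in> W) = (\<lambda>\<sigma>. True)" using C_W[OF h] by auto
  have "AE (\<lambda>\<sigma>. h \<sigma> \<in> W)" by (simp only: e AE_const)
  then show "W \<in> {b. b \<subseteq> W \<and> AE (\<lambda>\<sigma>. h \<sigma> \<in> b)}" by simp
  show "{} \<notin> {b. b \<subseteq> W \<and> AE (\<lambda>\<sigma>. h \<sigma> \<in> b)}" by (simp add: AE_const)
next
  fix X Y assume "X \<in> {b. b \<subseteq> W \<and> AE (\<lambda>\<sigma>. h \<sigma> \<in> b)}" "Y \<in> {b. b \<subseteq> W \<and> AE (\<lambda>\<sigma>. h \<sigma> \<in> b)}"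
  then have xy: "X \<subseteq> W" "AE (\<lambda>\<sigma>. h \<sigma> \<in> X)" "AE (\<lambda>\<sigma>. h \<sigma> \<in> Y)" by simp_all
  have c: "AE (\<lambda>\<sigma>. h \<sigma> \<in> X \<and> h \<sigma> \<in> Y)"
    using AE_conj[OF findep_mem[OF h] findep_mem[OF h], of X Y] xy(2,3) by blast
  have "AE (\<lambda>\<sigma>. h \<sigma> \<in> X \<inter> Y)" using c by (simp only: Int_iff)
  moreover have "X \<inter> Y \<subseteq> W" using xy(1) by blast
  ultimately show "X \<inter> Y \<in> {b. b \<subseteq> W \<and> AE (\<lambda>\<sigma>. h \<sigma> \<in> b)}" by (intro CollectI conjI)
next
  fix X Y assume a: "X \<in> {b. b \<subseteq> W \<and> AE (\<lambda>\<sigma>. h \<sigma> \<in> b)}" "X \<subseteq> Y \<and> Y \<subseteq> W"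
  then have ax: "AE (\<lambda>\<sigma>. h \<sigma> \<in> X)" by blast
  have "AE (\<lambda>\<sigma>. h \<sigma> \<in> Y)"
    by (rule AE_mono[OF ax _ findep_mem[OF h]]) (use a in blast)
  then show "Y \<in> {b. b \<subseteq> W \<and> AE (\<lambda>\<sigma>. h \<sigma> \<in> b)}" using a by (intro CollectI conjI) blast+
next
  fix X assume X: "X \<subseteq> W"
  show "X \<in> {b. b \<subseteq> W \<and> AE (\<lambda>\<sigma>. h \<sigma> \<in> b)} \<or> W - X \<in> {b. b \<subseteq> W \<and> AE (\<lambda>\<sigma>. h \<sigma> \<in> b)}"
  proof (cases "AE (\<lambda>\<sigma>. h \<sigma> \<in> X)")
    case False
    then have n: "AE (\<lambda>\<sigma>. h \<sigma> \<notin> X)" using AE_not[OF findep_mem[OF h]] by simp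
    have "AE (\<lambda>\<sigma>. h \<sigma> \<in> W - X)"
      by (rule AE_mono[OF n _ findep_mem[OF h]]) (simp add: C_W[OF h])
    then show ?thesis by simp
  qed (simp add: X)
qed
  then show ?thesis by (simp add: Uf_def)
qed

lemma fm_Uf_G: "c \<in> Gpts \<Longrightarrow> fm c \<in> Uf W"
  using fm_Uf[OF Gpts_rep(1)] Gpts_rep(2) by metis

lemma realize:
  assumes E: "findep E" and u: "u \<in> Uf W" and cons: "\<forall>b\<in>u. AE (\<lambda>\<sigma>. E \<sigma> \<inter> b \<noteq> {})"
  shows "\<exists>h\<in>C. AE (\<lambda>\<sigma>. h \<sigma> \<in> E \<sigma>) \<and> fm (cls h) = u"
proof -
  have uu: "ultrafilter_on W u" using u by (simp add: Uf_def)
  have uW: "b \<in> u \<Longrightarrow> b \<subseteq> W" for b using uu by (auto simp: ultrafilter_on_def)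
  obtain m where m: "dep m E" using E by (auto simp: findep_def)
  define g where "g \<sigma> = (if \<exists>v. v \<in> E \<sigma> \<inter> \<Inter>(\<sigma> m \<inter> u) \<inter> W then SOME v. v \<in> E \<sigma> \<inter> \<Inter>(\<sigma> m \<inter> u) \<inter> W else dflt)" for \<sigma>
  have gW: "g \<sigma> \<in> W" for \<sigma>
  proof (cases "\<exists>v. v \<in> E \<sigma> \<inter> \<Inter>(\<sigma> m \<inter> u) \<inter> W")
    case True
    from someI_ex[OF this] show ?thesis unfolding g_def using True by simp
  next
    case False
    have "g \<sigma> = dflt" unfolding g_def using False by (rule if_not_P)
    then show ?thesis using dflt by simp
  qed
  have gdep: "dep (Suc m) g" unfolding dep_def
  proof (intro allI impI)
    fix \<sigma> \<sigma>' :: "nat \<Rightarrow> 'a set set" assume a: "\<forall>k<Suc m. \<sigma> k = \<sigma>' k"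
    then have e1: "E \<sigma> = E \<sigma>'" using m unfolding dep_def by simp
    have e2: "\<sigma> m = \<sigma>' m" using a by simp
    show "g \<sigma> = g \<sigma>'" unfolding g_def e1 e2 by (rule refl)
  qed
  have gC: "g \<in> C" unfolding C_def findep_def using gdep gW by blast
  have Em: "dep (Suc m) E" using m by (rule dep_mono) simp
  have key: "AE (\<lambda>\<sigma>. g \<sigma> \<in> E \<sigma> \<inter> b)" if b: "b \<in> u" for b
  proof -
    have dP: "dep (Suc m) (\<lambda>\<sigma>. g \<sigma> \<in> E \<sigma> \<inter> b)" using gdep Em by (rule dep_comp2)
    have "A D (Suc m) (\<lambda>\<sigma>. g \<sigma> \<in> E \<sigma> \<inter> b)"
      unfolding A.simps
    proof (rule eventually_mono[OF cone[OF uW[OF b]]])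
      fix j assume j: "finite j \<and> j \<subseteq> Pow W \<and> b \<in> j"
      define c where "c = \<Inter>(j \<inter> u) \<inter> W"
      have cu: "c \<in> u" unfolding c_def by (rule uf_inter[OF uu]) (use j in auto)
      have dc: "dep m (\<lambda>\<sigma>. E \<sigma> \<inter> c \<noteq> {})" using m by (rule dep_comp)
      have "A D m (\<lambda>\<sigma>. E \<sigma> \<inter> c \<noteq> {})" using cons cu AE_iff[OF dc] by blast
      then show "A D m (\<lambda>\<sigma>. g (\<sigma>(m := j)) \<in> E (\<sigma>(m := j)) \<inter> b)"
      proof (rule A_mono)
        fix \<sigma> assume ne: "E \<sigma> \<inter> c \<noteq> {}"
        have E1: "E (\<sigma>(m := j)) = E \<sigma>" by (rule dep_upd[OF m]) simp
        have ex: "\<exists>v. v \<in> E \<sigma> \<inter> \<Inter>(j \<inter> u) \<inter> W" using ne unfolding c_def by blast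
        have "g (\<sigma>(m := j)) = (SOME v. v \<in> E \<sigma> \<inter> \<Inter>(j \<inter> u) \<inter> W)"
          unfolding g_def E1 using ex by simp
        then have "g (\<sigma>(m := j)) \<in> E \<sigma> \<inter> \<Inter>(j \<inter> u) \<inter> W" using someI_ex[OF ex] by simp
        then show "g (\<sigma>(m := j)) \<in> E (\<sigma>(m := j)) \<inter> b" using E1 j b by blast
      qed
    qed
    then show ?thesis using AE_iff[OF dP] by simp
  qed
  have fmg: "fm (cls g) = u"
  proof (rule sym, rule uf_sub_eq[OF uu])
    show "ultrafilter_on W (fm (cls g))" using fm_Uf[OF gC] by (simp add: Uf_def)
    show "u \<subseteq> fm (cls g)"
    proof
      fix b assume b: "b \<in> u"
      have "AE (\<lambda>\<sigma>. g \<sigma> \<in> b)"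
        by (rule AE_mono[OF key[OF b]]) (simp_all add: findep_mem[OF gC])
      then show "b \<in> fm (cls g)" using uW[OF b] by (simp add: fm_cls[OF gC])
    qed
  qed
  have Wu: "W \<in> u" using uu by (simp add: ultrafilter_on_def)
  have fg: "findep (\<lambda>\<sigma>. g \<sigma> \<in> E \<sigma>)" by (rule findep_comp2[OF C_findep[OF gC] E])
  have "AE (\<lambda>\<sigma>. g \<sigma> \<in> E \<sigma>)"
    by (rule AE_mono[OF key[OF Wu] _ fg]) blast
  then show ?thesis using gC fmg by blast
qed

lemma realize2:
  assumes h: "h \<in> C" and S: "S \<subseteq> Pow W"
    and hyp: "\<And>s. finite s \<Longrightarrow> s \<subseteq> S \<Longrightarrow> AE (\<lambda>\<sigma>. \<Inter>s \<inter> W \<in> nb F (h \<sigma>))"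
  shows "\<exists>E. findep E \<and> AE (\<lambda>\<sigma>. E \<sigma> \<in> nb F (h \<sigma>)) \<and> (\<forall>b\<in>S. AE (\<lambda>\<sigma>. E \<sigma> \<subseteq> b))"
proof -
  obtain m where m: "dep m h" using C_findep[OF h] by (auto simp: findep_def)
  define E where "E \<sigma> = \<Inter>(\<sigma> m \<inter> S) \<inter> W" for \<sigma>
  have Edep: "dep (Suc m) E" unfolding dep_def E_def by simp
  have hm: "dep (Suc m) h" using m by (rule dep_mono) simp
  have a1: "AE (\<lambda>\<sigma>. E \<sigma> \<in> nb F (h \<sigma>))"
  proof -
    have dP: "dep (Suc m) (\<lambda>\<sigma>. E \<sigma> \<in> nb F (h \<sigma>))" using Edep hm by (rule dep_comp2)
    have "A D (Suc m) (\<lambda>\<sigma>. E \<sigma> \<in> nb F (h \<sigma>))"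
      unfolding A.simps
    proof (rule eventually_mono[OF cone[of "{}"]])
      fix j assume j: "finite j \<and> j \<subseteq> Pow W \<and> {} \<in> j"
      have dq: "dep m (\<lambda>\<sigma>. \<Inter>(j \<inter> S) \<inter> W \<in> nb F (h \<sigma>))" using m by (rule dep_comp)
      have "A D m (\<lambda>\<sigma>. \<Inter>(j \<inter> S) \<inter> W \<in> nb F (h \<sigma>))"
        using hyp[of "j \<inter> S"] j AE_iff[OF dq] by simp
      then show "A D m (\<lambda>\<sigma>. E (\<sigma>(m := j)) \<in> nb F (h (\<sigma>(m := j))))"
      proof (rule A_mono)
        fix \<sigma> assume "\<Inter>(j \<inter> S) \<inter> W \<in> nb F (h \<sigma>)"
        moreover have "h (\<sigma>(m := j)) = h \<sigma>" by (rule dep_upd[OF m]) simp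
        ultimately show "E (\<sigma>(m := j)) \<in> nb F (h (\<sigma>(m := j)))" by (simp add: E_def)
      qed
    qed simp
    then show ?thesis using AE_iff[OF dP] by simp
  qed
  have a2: "AE (\<lambda>\<sigma>. E \<sigma> \<subseteq> b)" if b: "b \<in> S" for b
  proof -
    have dP: "dep (Suc m) (\<lambda>\<sigma>. E \<sigma> \<subseteq> b)" using Edep by (rule dep_comp)
    have bW: "b \<subseteq> W" using S b by blast
    have "A D (Suc m) (\<lambda>\<sigma>. E \<sigma> \<subseteq> b)"
      unfolding A.simps
    proof (rule eventually_mono[OF cone[OF bW]])
      fix j assume j: "finite j \<and> j \<subseteq> Pow W \<and> b \<in> j"
      show "A D m (\<lambda>\<sigma>. E (\<sigma>(m := j)) \<subseteq> b)"
        by (rule A_mono[OF A_True]) (use j b in \<open>auto simp: E_def\<close>)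
    qed
    then show ?thesis using AE_iff[OF dP] by simp
  qed
  have "findep E" using Edep by (auto simp: findep_def)
  then show ?thesis using a1 a2 by blast
qed

end



context constr begin

lemma fm_img: "fm ` Gpts = Uf W"
proof
  show "fm ` Gpts \<subseteq> Uf W" using fm_Uf_G by blast
  show "Uf W \<subseteq> fm ` Gpts"
  proof
    fix u assume u: "u \<in> Uf W"
    have uu: "ultrafilter_on W u" using u by (simp add: Uf_def)
    have cons: "\<forall>b\<in>u. AE (\<lambda>\<sigma>. (\<lambda>\<sigma>. W) \<sigma> \<inter> b \<noteq> {})"
    proof
      fix b assume b: "b \<in> u"
      have "b \<subseteq> W" "b \<noteq> {}" using uu b by (auto simp: ultrafilter_on_def)
      then have "W \<inter> b \<noteq> {}" by blast
      then show "AE (\<lambda>\<sigma>. (\<lambda>\<sigma>. W) \<sigma> \<inter> b \<noteq> {})" by (simp add: AE_const)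
    qed
    obtain h where h: "h \<in> C" "fm (cls h) = u"
      using realize[OF findep_const u cons] by blast
    then show "u \<in> fm ` Gpts" using cls_in[OF h(1)] by blast
  qed
qed

lemma bm: "bounded_morphism G0 (ue F) fm"
  unfolding bounded_morphism_def G0_pts G0_nb ue_pts
proof (intro conjI ballI allI impI)
  show "fm ` Gpts \<subseteq> Uf W" using fm_img by simp
  fix c U' assume cG: "c \<in> Gpts" and U': "U' \<subseteq> Uf W"
  obtain r where r_def: "r = rep c" by blast
  have r: "r \<in> C" unfolding r_def by (rule Gpts_rep(1)[OF cG])
  have fmc: "fm c = {b. b \<subseteq> W \<and> AE (\<lambda>\<sigma>. r \<sigma> \<in> b)}" by (simp add: fm_def r_def)
  let ?X = "{v \<in> Gpts. fm v \<in> U'}"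
  show "?X \<in> nbG c \<longleftrightarrow> U' \<in> nb (ue F) (fm c)"
  proof
    assume "?X \<in> nbG c"
    then have "?X \<subseteq> Gpts \<and> (\<exists>E. findep E \<and> AE (\<lambda>\<sigma>. E \<sigma> \<in> nb F (rep c \<sigma>)) \<and> ext E \<subseteq> ?X)"
      unfolding nbG_def by (rule CollectD)
    then have "\<exists>E. findep E \<and> AE (\<lambda>\<sigma>. E \<sigma> \<in> nb F (r \<sigma>)) \<and> ext E \<subseteq> ?X"
      unfolding r_def by (rule conjunct2)
    then obtain E where E: "findep E" "AE (\<lambda>\<sigma>. E \<sigma> \<in> nb F (r \<sigma>))" "ext E \<subseteq> ?X"
      by (elim exE conjE)
    define S0 where "S0 = {a. a \<subseteq> W \<and> AE (\<lambda>\<sigma>. E \<sigma> \<inter> W \<subseteq> a)}"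
    define K where "K = Uf W \<inter> (\<Inter>a\<in>S0. basic W a)"
    have S0W: "S0 \<subseteq> Pow W" unfolding S0_def by blast
    have closed: "closed_uf W K" unfolding closed_uf_def K_def
      by (rule exI[of _ S0]) (simp add: S0W)
    have fEa: "findep (\<lambda>\<sigma>. E \<sigma> \<inter> W \<subseteq> a)" for a using E(1) by (rule findep_comp)
    have KU: "K \<subseteq> U'"
    proof
      fix u assume uK: "u \<in> K"
      then have u: "u \<in> Uf W" and uS: "\<And>a. a \<in> S0 \<Longrightarrow> a \<in> u"
        by (auto simp: K_def basic_def)
      have uu: "ultrafilter_on W u" using u by (simp add: Uf_def)
      have cons: "\<forall>b\<in>u. AE (\<lambda>\<sigma>. E \<sigma> \<inter> b \<noteq> {})"
      proof
        fix b assume b: "b \<in> u"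
        have bW: "b \<subseteq> W" using uu b by (auto simp: ultrafilter_on_def)
        have fb: "findep (\<lambda>\<sigma>. E \<sigma> \<inter> b \<noteq> {})" using E(1) by (rule findep_comp)
        show "AE (\<lambda>\<sigma>. E \<sigma> \<inter> b \<noteq> {})"
        proof (rule ccontr)
          assume "\<not> AE (\<lambda>\<sigma>. E \<sigma> \<inter> b \<noteq> {})"
          then have n: "AE (\<lambda>\<sigma>. \<not> E \<sigma> \<inter> b \<noteq> {})" using AE_not[OF fb] by simp
          have "AE (\<lambda>\<sigma>. E \<sigma> \<inter> W \<subseteq> W - b)"
            by (rule AE_mono[OF n _ fEa]) blast
          then have "W - b \<in> S0" by (simp add: S0_def)
          then have "W - b \<in> u" by (rule uS)
          then show False using uf_compl[OF uu b] by simp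
        qed
      qed
      obtain h where h: "h \<in> C" "AE (\<lambda>\<sigma>. h \<sigma> \<in> E \<sigma>)" "fm (cls h) = u"
        using realize[OF E(1) u cons] by blast
      have "cls h \<in> ext E" using ext_mem[OF h(1) E(1)] h(2) by simp
      then have "cls h \<in> ?X" using E(3) by blast
      then show "u \<in> U'" using h(3) by simp
    qed
    have box: "cbox F a \<in> fm c" if aW: "a \<subseteq> W" and Ka: "K \<subseteq> basic W a" for a
    proof -
      have ain: "AE (\<lambda>\<sigma>. E \<sigma> \<inter> W \<subseteq> a)"
      proof (rule ccontr)
        assume "\<not> AE (\<lambda>\<sigma>. E \<sigma> \<inter> W \<subseteq> a)"
        then have n: "AE (\<lambda>\<sigma>. \<not> (E \<sigma> \<inter> W \<subseteq> a))" using AE_not[OF fEa] by simp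
        have fq: "findep (\<lambda>\<sigma>. \<lambda>v. v \<in> E \<sigma> \<and> v \<notin> a)" using E(1) by (rule findep_comp)
        obtain h where h: "h \<in> C" and hq: "\<And>\<sigma>. (\<exists>v\<in>W. v \<in> E \<sigma> \<and> v \<notin> a) \<longrightarrow> h \<sigma> \<in> E \<sigma> \<and> h \<sigma> \<notin> a"
          using choose[OF fq] by blast
        have fh1: "findep (\<lambda>\<sigma>. h \<sigma> \<in> E \<sigma>)" by (rule findep_comp2[OF C_findep[OF h] E(1)])
        have fh2: "findep (\<lambda>\<sigma>. h \<sigma> \<notin> a)" by (rule findep_comp[OF findep_mem[OF h]])
        have a1: "AE (\<lambda>\<sigma>. h \<sigma> \<in> E \<sigma>)" by (rule AE_mono[OF n _ fh1]) (use hq in blast)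
        have a2: "AE (\<lambda>\<sigma>. h \<sigma> \<notin> a)" by (rule AE_mono[OF n _ fh2]) (use hq in blast)
        have uK: "fm (cls h) \<in> K" unfolding K_def
        proof (intro IntI INT_I)
          show "fm (cls h) \<in> Uf W" by (rule fm_Uf[OF h])
          fix a' assume a': "a' \<in> S0"
          then have a'W: "a' \<subseteq> W" and a'A: "AE (\<lambda>\<sigma>. E \<sigma> \<inter> W \<subseteq> a')" by (simp_all add: S0_def)
          have "AE (\<lambda>\<sigma>. h \<sigma> \<in> a')"
          proof (rule AE_mp[OF a'A a1 _ findep_mem[OF h]])
            fix \<sigma> assume "E \<sigma> \<inter> W \<subseteq> a'" "h \<sigma> \<in> E \<sigma>"
            then show "h \<sigma> \<in> a'" using C_W[OF h] by blast
          qed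
          then have "a' \<in> fm (cls h)" using a'W by (simp add: fm_cls[OF h])
          then show "fm (cls h) \<in> basic W a'" using fm_Uf[OF h] by (simp add: basic_def)
        qed
        then have "fm (cls h) \<in> basic W a" using Ka by blast
        then have "AE (\<lambda>\<sigma>. h \<sigma> \<in> a)" by (simp add: basic_def fm_cls[OF h])
        then show False using a2 AE_not[OF findep_mem[OF h]] by simp
      qed
      have fcb: "findep (\<lambda>\<sigma>. r \<sigma> \<in> cbox F a)" by (rule findep_mem[OF r])
      have "AE (\<lambda>\<sigma>. r \<sigma> \<in> cbox F a)"
      proof (rule AE_mp[OF E(2) ain _ fcb])
        fix \<sigma> assume e: "E \<sigma> \<in> nb F (r \<sigma>)" "E \<sigma> \<inter> W \<subseteq> a"
        have rw: "r \<sigma> \<in> W" by (rule C_W[OF r])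
        have "E \<sigma> \<subseteq> W" by (rule nbF_sub[OF rw e(1)])
        then have "E \<sigma> \<subseteq> a" using e(2) by blast
        then have "a \<in> nb F (r \<sigma>)" by (rule monF[OF rw e(1) _ aW])
        then show "r \<sigma> \<in> cbox F a" using rw by (simp add: cbox_def)
      qed
      moreover have "cbox F a \<subseteq> W" by (auto simp: cbox_def)
      ultimately show ?thesis by (simp add: fmc)
    qed
    show "U' \<in> nb (ue F) (fm c)" unfolding ue_nb
      using U' closed KU box by blast
  next
    assume "U' \<in> nb (ue F) (fm c)"
    then obtain K where K: "closed_uf W K" "K \<subseteq> U'"
      and Kbox: "\<And>a. a \<subseteq> W \<Longrightarrow> K \<subseteq> basic W a \<Longrightarrow> cbox F a \<in> fm c"
      unfolding ue_nb by blast
    obtain S where S: "S \<subseteq> Pow W" and KS: "K = Uf W \<inter> (\<Inter>a\<in>S. basic W a)"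
      using K(1) unfolding closed_uf_def by blast
    have hyp: "AE (\<lambda>\<sigma>. \<Inter>s \<inter> W \<in> nb F (r \<sigma>))" if s: "finite s" "s \<subseteq> S" for s
    proof -
      have "K \<subseteq> basic W (\<Inter>s \<inter> W)"
      proof
        fix u assume "u \<in> K"
        then have u: "u \<in> Uf W" and ua: "\<And>a. a \<in> S \<Longrightarrow> a \<in> u" by (auto simp: KS basic_def)
        have uu: "ultrafilter_on W u" using u by (simp add: Uf_def)
        have "\<Inter>s \<inter> W \<in> u" by (rule uf_inter[OF uu s(1)]) (use s(2) ua in blast)
        then show "u \<in> basic W (\<Inter>s \<inter> W)" using u by (simp add: basic_def)
      qed
      then have "cbox F (\<Inter>s \<inter> W) \<in> fm c" using Kbox by blast
      then have a: "AE (\<lambda>\<sigma>. r \<sigma> \<in> cbox F (\<Inter>s \<inter> W))" by (simp add: fmc)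
      have fq: "findep (\<lambda>\<sigma>. \<Inter>s \<inter> W \<in> nb F (r \<sigma>))" by (rule findep_comp[OF C_findep[OF r]])
      show ?thesis by (rule AE_mono[OF a _ fq]) (simp add: cbox_def)
    qed
    obtain E where E: "findep E" "AE (\<lambda>\<sigma>. E \<sigma> \<in> nb F (r \<sigma>))" "\<forall>b\<in>S. AE (\<lambda>\<sigma>. E \<sigma> \<subseteq> b)"
      using realize2[OF r S hyp] by blast
    have "ext E \<subseteq> ?X"
    proof
      fix v assume v: "v \<in> ext E"
      then have vG: "v \<in> Gpts" and a: "AE (\<lambda>\<sigma>. rep v \<sigma> \<in> E \<sigma>)" by (simp_all add: ext_def)
      have rv: "rep v \<in> C" by (rule Gpts_rep(1)[OF vG])
      have fv: "fm v = fm (cls (rep v))" using Gpts_rep(2)[OF vG] by simp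
      have "fm v \<in> K" unfolding KS
      proof (intro IntI INT_I)
        show "fm v \<in> Uf W" using fm_Uf_G[OF vG] .
        fix b assume b: "b \<in> S"
        have "AE (\<lambda>\<sigma>. rep v \<sigma> \<in> b)"
        proof (rule AE_mp[OF a _ _ findep_mem[OF rv]])
          show "AE (\<lambda>\<sigma>. E \<sigma> \<subseteq> b)" using E(3) b by blast
        qed blast
        then have "b \<in> fm v" using b S by (auto simp: fm_def)
        then show "fm v \<in> basic W b" using fm_Uf_G[OF vG] by (simp add: basic_def)
      qed
      then show "v \<in> ?X" using K(2) vG by blast
    qed
    moreover have "?X \<subseteq> Gpts" by blast
    ultimately show "?X \<in> nbG c" unfolding nbG_def r_def[symmetric] using E(1,2) by blast
  qed
qed

end



definition tt :: "nat \<Rightarrow> 'a" where "tt = (SOME t. inj t)"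

lemma tt_inj: "\<not> finite (UNIV :: 'a set) \<Longrightarrow> inj (tt :: nat \<Rightarrow> 'a)"
proof -
  assume "\<not> finite (UNIV :: 'a set)"
  then have "\<exists>f::nat \<Rightarrow> 'a. inj f \<and> range f \<subseteq> UNIV"
    by (simp only: infinite_iff_countable_subset[of "UNIV :: 'a set"])
  then have "\<exists>t::nat \<Rightarrow> 'a. inj t" by (elim exE conjE) (rule exI)
  then show ?thesis unfolding tt_def by (rule someI_ex)
qed

definition cde :: "nat \<Rightarrow> 'a set \<Rightarrow> 'a set" where
  "cde k b = (b - range tt) \<union> tt ` ({2*k} \<union> {2*m+1 | m. tt m \<in> b})"

lemma cde_tt:
  assumes "inj (tt :: nat \<Rightarrow> 'a)"
  shows "(tt m :: 'a) \<in> cde k b \<longleftrightarrow> (m = 2*k \<or> (\<exists>m'. m = 2*m'+1 \<and> tt m' \<in> b))"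
proof -
  have "(tt m :: 'a) \<in> tt ` X \<longleftrightarrow> m \<in> X" for X using assms by (rule inj_image_mem_iff)
  then show ?thesis unfolding cde_def by auto
qed

lemma cde_inj:
  assumes inf: "\<not> finite (UNIV :: 'a set)" and e: "cde k b = (cde k' b' :: 'a set)"
  shows "k = k' \<and> b = b'"
proof -
  have inj: "inj (tt :: nat \<Rightarrow> 'a)" by (rule tt_inj[OF inf])
  have m: "(m = 2*k \<or> (\<exists>m'. m = 2*m'+1 \<and> tt m' \<in> b)) \<longleftrightarrow> (m = 2*k' \<or> (\<exists>m'. m = 2*m'+1 \<and> tt m' \<in> b'))" for m
    using cde_tt[OF inj, of m k b] cde_tt[OF inj, of m k' b'] e by simp
  have "2*k = 2*k' \<or> (\<exists>m'. 2*k = 2*m'+1 \<and> tt m' \<in> b')" using m[of "2*k"] by simp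
  moreover have "\<not> (\<exists>m'. 2*k = 2*m'+1 \<and> tt m' \<in> b')" by presburger
  ultimately have "2*k = 2*k'" by blast
  then have kk: "k = k'" by simp
  have bT: "tt m' \<in> b \<longleftrightarrow> tt m' \<in> b'" for m'
  proof -
    have n1: "2*m'+1 \<noteq> 2*k" "2*m'+1 \<noteq> 2*k'" by presburger+
    have "(\<exists>m''. 2*m'+1 = 2*m''+1 \<and> tt m'' \<in> b) \<longleftrightarrow> tt m' \<in> b" by auto
    moreover have "(\<exists>m''. 2*m'+1 = 2*m''+1 \<and> tt m'' \<in> b') \<longleftrightarrow> tt m' \<in> b'" by auto
    ultimately have q: "(2*m'+1 = 2*k \<or> (\<exists>m''. 2*m'+1 = 2*m''+1 \<and> tt m'' \<in> b)) \<longleftrightarrow> tt m' \<in> b"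
      "(2*m'+1 = 2*k' \<or> (\<exists>m''. 2*m'+1 = 2*m''+1 \<and> tt m'' \<in> b')) \<longleftrightarrow> tt m' \<in> b'" using n1 by simp_all
    show ?thesis using m[of "2*m'+1"] q by simp
  qed
  have bO: "x \<notin> range tt \<Longrightarrow> x \<in> b \<longleftrightarrow> x \<in> b'" for x
  proof -
    assume x: "x \<notin> range tt"
    have "x \<in> cde k b \<longleftrightarrow> x \<in> b" using x unfolding cde_def by blast
    moreover have "x \<in> cde k' b' \<longleftrightarrow> x \<in> b'" using x unfolding cde_def by blast
    ultimately show ?thesis using e by simp
  qed
  have "b = b'"
  proof (rule set_eqI)
    fix x show "x \<in> b \<longleftrightarrow> x \<in> b'"
    proof (cases "x \<in> range tt")
      case True then obtain m' where "x = tt m'" by blast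
      then show ?thesis using bT by simp
    qed (rule bO)
  qed
  then show ?thesis using kk by simp
qed

definition Enc :: "'a set set list \<Rightarrow> 'a \<Rightarrow> 'a set set" where
  "Enc l v = (if finite (UNIV :: 'a set) then {{v}} else
     {cde 0 {v}} \<union> {cde (3*k+1) {} | k. k < length l} \<union> {cde (3*k+2) b | k b. k < length l \<and> b \<in> l!k})"

lemma Enc_inj:
  assumes inf: "\<not> finite (UNIV :: 'a set)" and e: "Enc l v = Enc l' (v' :: 'a)"
  shows "l = l' \<and> v = v'"
proof -
  let ?E = "\<lambda>l v. {cde 0 {v}} \<union> {cde (3*k+1) {} | k. k < length l} \<union> {cde (3*k+2) b | k b. k < length l \<and> (b::'a set) \<in> l!k}"
  have e': "?E l v = ?E l' v'" using e inf by (simp add: Enc_def)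
  have ci: "cde k b = cde k' b' \<longleftrightarrow> k = k' \<and> b = b'" for k k' and b b' :: "'a set"
    using cde_inj[OF inf] by blast
  have mem0: "cde 0 {w} \<in> ?E ll vv \<longleftrightarrow> w = vv" for w ll vv
    by (auto simp: ci)
  have mem1: "cde (3*k+1) {} \<in> ?E ll vv \<longleftrightarrow> k < length ll" for k ll vv
    by (auto simp: ci; presburger)
  have mem2: "cde (3*k+2) b \<in> ?E ll vv \<longleftrightarrow> k < length ll \<and> b \<in> ll!k" for k b ll vv
    by (auto simp: ci; presburger)
  have memeq: "x \<in> ?E l v \<longleftrightarrow> x \<in> ?E l' v'" for x using e' by (simp only:)
  have vv: "v = v'"
    using mem0[where w=v and ll=l' and vv=v', THEN iffD1, OF memeq[THEN iffD1, OF mem0[where w=v and ll=l and vv=v, THEN iffD2, OF refl]]] .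
  have lenk: "k < length l \<longleftrightarrow> k < length l'" for k
    using mem1[where k=k and ll=l and vv=v] mem1[where k=k and ll=l' and vv=v'] memeq[of "cde (3*k+1) {}"] by blast
  have len: "length l = length l'"
    using lenk[of "length l"] lenk[of "length l'"] by linarith
  have "l = l'"
  proof (rule nth_equalityI[OF len])
    fix k assume k0: "k < length l"
    have k: "k < length l" "k < length l'" using k0 len by simp_all
    have "b \<in> l!k \<longleftrightarrow> b \<in> l'!k" for b
      using mem2[where k=k and b=b and ll=l and vv=v] mem2[where k=k and b=b and ll=l' and vv=v']
        memeq[of "cde (3*k+2) b"] k by blast
    then show "l!k = l'!k" by blast
  qed
  then show ?thesis using vv by simp
qed

definition seq :: "'b list \<Rightarrow> nat \<Rightarrow> 'b" where
  "seq l = (\<lambda>k. if k < length l then l ! k else undefined)"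

context constr begin

definition Idx where "Idx = {j. finite j \<and> j \<subseteq> Pow W}"

lemma empty_I: "{} \<in> Idx" by (simp add: Idx_def)

lemma ev_I: "eventually (\<lambda>j. j \<in> Idx) D"
  unfolding Idx_def by (rule eventually_mono[OF cone[of "{}"]]) simp_all

lemma A_I: "A D n (\<lambda>\<sigma>. \<forall>k<n. \<sigma> k \<in> Idx)"
proof (induction n)
  case 0 then show ?case by simp
next
  case (Suc n)
  show ?case unfolding A.simps
  proof (rule eventually_mono[OF ev_I])
    fix j assume j: "j \<in> Idx"
    show "A D n (\<lambda>\<sigma>. \<forall>k<Suc n. (\<sigma>(n := j)) k \<in> Idx)"
      by (rule A_mono[OF Suc.IH]) (use j in \<open>auto simp: less_Suc_eq\<close>)
  qed
qed

lemma same_cls: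
  assumes h: "h \<in> C" and h': "h' \<in> C" and d: "dep n h" and d': "dep n h'"
    and eq: "\<And>l. length l = n \<Longrightarrow> set l \<subseteq> Idx \<Longrightarrow> h (seq l) = h' (seq l)"
  shows "cls h = cls h'"
proof -
  have dP: "dep n (\<lambda>\<sigma>. h \<sigma> = h' \<sigma>)" using d d' by (rule dep_comp2)
  have "A D n (\<lambda>\<sigma>. h \<sigma> = h' \<sigma>)"
  proof (rule A_mono[OF A_I])
    fix \<sigma> assume s: "\<forall>k<n. \<sigma> k \<in> Idx"
    define l where "l = map \<sigma> [0..<n]"
    have ln: "length l = n" by (simp add: l_def)
    have lI: "set l \<subseteq> Idx" using s by (auto simp: l_def)
    have ag: "\<forall>k<n. seq l k = \<sigma> k" by (simp add: seq_def l_def)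
    have "h (seq l) = h \<sigma>" using d ag unfolding dep_def by blast
    moreover have "h' (seq l) = h' \<sigma>" using d' ag unfolding dep_def by blast
    ultimately show "h \<sigma> = h' \<sigma>" using eq[OF ln lI] by simp
  qed
  then have "AE (\<lambda>\<sigma>. h \<sigma> = h' \<sigma>)" using AE_iff[OF dP] by simp
  then show ?thesis using cls_eq[OF h h'] by simp
qed

lemma mem_cls:
  assumes c: "c \<in> Gpts" and h: "h \<in> c"
  shows "h \<in> C" "cls h = c"
proof -
  obtain h0 where h0: "h0 \<in> C" "c = cls h0" using c by (auto simp: Gpts_def)
  show hC: "h \<in> C" using h h0 by (simp add: cls_def)
  have "AE (\<lambda>\<sigma>. h0 \<sigma> = h \<sigma>)" using h h0 by (simp add: cls_def)
  then have "cls h0 = cls h" using cls_eq[OF h0(1) hC] by simp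
  then show "cls h = c" using h0 by simp
qed

definition lev where "lev c = (LEAST n. \<exists>h\<in>c. dep n h)"
definition crep where "crep c = (SOME h. h \<in> c \<and> dep (lev c) h)"

lemma crep:
  assumes c: "c \<in> Gpts"
  shows "crep c \<in> C" "cls (crep c) = c" "dep (lev c) (crep c)"
proof -
  have r: "rep c \<in> c" using cls_self[OF Gpts_rep(1)[OF c]] Gpts_rep(2)[OF c] by simp
  obtain n where "dep n (rep c)" using C_findep[OF Gpts_rep(1)[OF c]] by (auto simp: findep_def)
  then have "\<exists>n. \<exists>h\<in>c. dep n h" using r by blast
  then have "\<exists>h\<in>c. dep (lev c) h" unfolding lev_def by (rule LeastI_ex)
  then have "\<exists>h. h \<in> c \<and> dep (lev c) h" by blast
  then have cc: "crep c \<in> c \<and> dep (lev c) (crep c)" unfolding crep_def by (rule someI_ex)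
  show "crep c \<in> C" "cls (crep c) = c" using mem_cls[OF c] cc by simp_all
  show "dep (lev c) (crep c)" using cc by simp
qed

definition iota :: "((nat \<Rightarrow> 'a set set) \<Rightarrow> 'a) set \<Rightarrow> 'a set set set" where
  "iota c = (\<lambda>l. Enc l (crep c (seq l))) ` {l. length l = lev c \<and> set l \<subseteq> Idx}"

lemma eq_by_reps:
  assumes c: "c \<in> Gpts" and c': "c' \<in> Gpts" and lv: "lev c = lev c'"
    and eq: "\<And>l. length l = lev c \<Longrightarrow> set l \<subseteq> Idx \<Longrightarrow> crep c (seq l) = crep c' (seq l)"
  shows "c = c'"
proof -
  have "cls (crep c) = cls (crep c')"
    by (rule same_cls[OF crep(1)[OF c] crep(1)[OF c'] crep(3)[OF c]]) (use crep(3)[OF c'] lv eq in simp_all)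
  then show ?thesis using crep(2)[OF c] crep(2)[OF c'] by simp
qed

lemma principal:
  assumes fin: "finite (UNIV :: 'a set)"
  shows "\<exists>i0. \<forall>P. eventually P D \<longleftrightarrow> P i0"
proof -
  have fin1: "finite (UNIV :: 'a set set)" using fin by (simp add: Pow_UNIV[symmetric] del: Pow_UNIV)
  have finI: "finite (UNIV :: 'a set set set)" using fin1 by (simp add: Pow_UNIV[symmetric] del: Pow_UNIV)
  have "\<exists>i0. eventually (\<lambda>j. j = i0) D"
  proof (rule ccontr)
    assume "\<not> (\<exists>i0. eventually (\<lambda>j. j = i0) D)"
    then have "\<forall>i\<in>UNIV. eventually (\<lambda>j. j \<noteq> i) D" using ev_not by auto
    then have "eventually (\<lambda>j. \<forall>i\<in>UNIV. j \<noteq> i) D"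
      using eventually_ball_finite_distrib[OF finI, where P="\<lambda>j i. j \<noteq> i" and net=D] by simp
    then have "eventually (\<lambda>j. False) D" by simp
    then show False using ev_const by simp
  qed
  then obtain i0 where i0: "eventually (\<lambda>j. j = i0) D" by blast
  have "eventually P D \<longleftrightarrow> P i0" for P
  proof
    assume p: "P i0" show "eventually P D" by (rule eventually_mono[OF i0]) (simp add: p)
  next
    assume ev: "eventually P D"
    show "P i0"
    proof (rule ccontr)
      assume p: "\<not> P i0"
      have "eventually (\<lambda>j. \<not> P j) D" by (rule eventually_mono[OF i0]) (simp add: p)
      then show False using ev ev_not by simp
    qed
  qed
  then show ?thesis by blast
qed

lemma lev0:
  assumes fin: "finite (UNIV :: 'a set)" and c: "c \<in> Gpts"
  shows "lev c = 0"
proof -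
  obtain i0 where i0: "\<And>P. eventually P D \<longleftrightarrow> P i0" using principal[OF fin] by blast
  define star where "star n = (\<lambda>k. if k < n then i0 else undefined)" for n :: nat
  have Astar: "A D n P \<longleftrightarrow> P (star n)" for n P
  proof (induction n arbitrary: P)
    case 0
    have "star 0 = (\<lambda>_. undefined)" by (simp add: star_def)
    then show ?case by simp
  next
    case (Suc n)
    have "(star n)(n := i0) = star (Suc n)" by (rule ext) (simp add: star_def less_Suc_eq)
    then show ?case by (simp add: i0 Suc.IH)
  qed
  define h where "h = crep c"
  define n where "n = lev c"
  have hC: "h \<in> C" and dh: "dep n h" using crep[OF c] by (simp_all add: h_def n_def)
  define h0 where "h0 = (\<lambda>\<sigma>::nat \<Rightarrow> 'a set set. h (star n))"
  have h0C: "h0 \<in> C" unfolding h0_def by (rule const_C[OF C_W[OF hC]])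
  have dP: "dep n (\<lambda>\<sigma>. h \<sigma> = h0 \<sigma>)" unfolding h0_def using dh by (rule dep_comp)
  have "AE (\<lambda>\<sigma>. h \<sigma> = h0 \<sigma>)" using AE_iff[OF dP] Astar by (simp add: h0_def)
  then have "h0 \<in> cls h" using h0C by (simp add: cls_def)
  then have "h0 \<in> c" using crep(2)[OF c] by (simp add: h_def)
  moreover have "dep 0 h0" unfolding h0_def by (rule dep_const)
  ultimately have "\<exists>h\<in>c. dep 0 h" by blast
  then have "lev c \<le> 0" unfolding lev_def by (rule Least_le)
  then show ?thesis by simp
qed

lemma iota_inj: "inj_on iota Gpts"
proof (rule inj_onI)
  fix c c' assume c: "c \<in> Gpts" and c': "c' \<in> Gpts" and e: "iota c = iota c'"
  show "c = c'"
  proof (cases "finite (UNIV :: 'a set)")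
    case True
    have l0: "lev c = 0" "lev c' = 0" using lev0[OF True] c c' by simp_all
    have s: "{l :: 'a set set list. l = [] \<and> set l \<subseteq> Idx} = {[]}" by auto
    have "iota c = {{{crep c (seq [])}}}" "iota c' = {{{crep c' (seq [])}}}"
      by (simp_all add: iota_def l0 s Enc_def True)
    then have ce: "crep c (seq []) = crep c' (seq [])" using e by simp
    show ?thesis
    proof (rule eq_by_reps[OF c c'])
      show "lev c = lev c'" using l0 by simp
      fix l :: "'a set set list" assume "length l = lev c" "set l \<subseteq> Idx"
      then have "l = []" using l0 by simp
      then show "crep c (seq l) = crep c' (seq l)" using ce by simp
    qed
  next
    case False
    define l0 where "l0 = replicate (lev c) ({} :: 'a set set)"
    have "set l0 \<subseteq> {{}}" unfolding l0_def by (simp add: set_replicate_conv_if)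
    then have "set l0 \<subseteq> Idx" using empty_I by blast
    then have l0m: "length l0 = lev c \<and> set l0 \<subseteq> Idx" by (simp add: l0_def)
    then have "Enc l0 (crep c (seq l0)) \<in> iota c'" using e unfolding iota_def by blast
    then obtain l' where l': "length l' = lev c'" "Enc l0 (crep c (seq l0)) = Enc l' (crep c' (seq l'))"
      unfolding iota_def by blast
    have lv: "lev c = lev c'" using Enc_inj[OF False l'(2)] l'(1) l0m by simp
    show ?thesis
    proof (rule eq_by_reps[OF c c' lv])
      fix l :: "'a set set list" assume l: "length l = lev c" "set l \<subseteq> Idx"
      then have "Enc l (crep c (seq l)) \<in> iota c'" using e unfolding iota_def by blast
      then obtain l' where "Enc l (crep c (seq l)) = Enc l' (crep c' (seq l'))"
        unfolding iota_def by blast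
      then show "crep c (seq l) = crep c' (seq l)" using Enc_inj[OF False] by blast
    qed
  qed
qed

end



lemma main_nonempty:
  fixes F :: "'a nframe"
  assumes mon: "monotonic F" and ne: "pts F \<noteq> {}"
  shows "\<exists>(G0 :: ((nat \<Rightarrow> 'a set set) \<Rightarrow> 'a) set nframe) (\<iota> :: ((nat \<Rightarrow> 'a set set) \<Rightarrow> 'a) set \<Rightarrow> 'a set set set) f.
     monotonic G0 \<and> Th G0 = Th F \<and> (quasi_filter F \<longrightarrow> quasi_filter G0) \<and>
     bounded_morphism G0 (ue F) f \<and> f ` pts G0 = pts (ue F) \<and> inj_on \<iota> (pts G0)"
proof -
  define cone where "cone b = {j :: 'a set set. finite j \<and> j \<subseteq> Pow (pts F) \<and> b \<in> j}" for b
  define S where "S = cone ` Pow (pts F)"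
  have injc: "inj_on cone (Pow (pts F))"
  proof (rule inj_onI)
    fix b b' assume b: "b \<in> Pow (pts F)" "b' \<in> Pow (pts F)" and e: "cone b = cone b'"
    have "{b} \<in> cone b" using b(1) by (simp add: cone_def)
    then have "{b} \<in> cone b'" using e by simp
    then show "b = b'" by (simp add: cone_def)
  qed
  have "fip S" unfolding fip_def
  proof (intro allI impI)
    fix s assume s: "finite s" "s \<subseteq> S"
    define B where "B = {b \<in> Pow (pts F). cone b \<in> s}"
    have "cone ` B \<subseteq> s" by (auto simp: B_def)
    then have "finite (cone ` B)" using s(1) by (rule finite_subset)
    moreover have "inj_on cone B" using injc by (rule inj_on_subset) (auto simp: B_def)
    ultimately have fB: "finite B" by (rule finite_imageD)
    have "B \<in> \<Inter>s"
    proof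
      fix X assume X: "X \<in> s"
      then obtain b where b: "b \<in> Pow (pts F)" "X = cone b" using s(2) by (auto simp: S_def)
      then have "b \<in> B" using X by (simp add: B_def)
      moreover have "B \<subseteq> Pow (pts F)" by (auto simp: B_def)
      ultimately show "B \<in> X" using b fB by (simp add: cone_def)
    qed
    then show "\<Inter>s \<noteq> {}" by blast
  qed
  then obtain D :: "'a set set filter" where D: "D \<noteq> bot" "\<And>P. eventually P D \<or> eventually (\<lambda>x. \<not> P x) D"
    "\<forall>X\<in>S. eventually (\<lambda>x. x \<in> X) D"
    using ultra_exists by blast
  interpret c: constr D F
  proof
    show "D \<noteq> bot" by (rule D(1))
    show "eventually P D \<or> eventually (\<lambda>x. \<not> P x) D" for P by (rule D(2))
    show "monotonic F" by (rule mon)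
    show "pts F \<noteq> {}" by (rule ne)
    fix b assume "b \<subseteq> pts F"
    then have "cone b \<in> S" by (simp add: S_def)
    then have "eventually (\<lambda>x. x \<in> cone b) D" using D(3) by blast
    then show "eventually (\<lambda>j. finite j \<and> j \<subseteq> Pow (pts F) \<and> b \<in> j) D" by (simp add: cone_def)
  qed
  have "monotonic c.G0" by (rule c.mon_G0)
  moreover have "Th c.G0 = Th F" by (rule c.Th_G0)
  moreover have "quasi_filter F \<longrightarrow> quasi_filter c.G0" using c.qf_G0 by blast
  moreover have "bounded_morphism c.G0 (ue F) c.fm" by (rule c.bm)
  moreover have "c.fm ` pts c.G0 = pts (ue F)" using c.fm_img by (simp add: c.G0_pts ue_pts)
  moreover have "inj_on c.iota (pts c.G0)" using c.iota_inj by (simp add: c.G0_pts)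
  ultimately show ?thesis by blast
qed

lemma key:
  fixes F :: "'a nframe"
  assumes mon: "monotonic F"
  shows "\<exists>G :: 'a set set set nframe. monotonic G \<and> Th G = Th F \<and> (quasi_filter F \<longrightarrow> quasi_filter G) \<and>
           (\<exists>f. bounded_morphism G (ue F) f \<and> f ` pts G = pts (ue F))"
proof (cases "pts F = {}")
  case True
  define \<iota> :: "'a \<Rightarrow> 'a set set set" where "\<iota> x = {{{x}}}" for x
  have inj: "inj_on \<iota> (pts F)" using True by simp
  define f :: "'a \<Rightarrow> 'a set set" where "f x = {}" for x
  have bm: "bounded_morphism F (ue F) f" using True by (simp add: bounded_morphism_def)
  note t = transfer[OF mon inj]
  have "(f \<circ> inv_into (pts F) \<iota>) ` pts (tr \<iota> F) = pts (ue F)"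
    using t(5)[of f] True by (simp add: ue_pts Uf_empty)
  then show ?thesis using t(1,2,3) t(4)[OF bm] by blast
next
  case False
  obtain G0 :: "((nat \<Rightarrow> 'a set set) \<Rightarrow> 'a) set nframe" and \<iota> :: "((nat \<Rightarrow> 'a set set) \<Rightarrow> 'a) set \<Rightarrow> 'a set set set" and f
    where G0: "monotonic G0" "Th G0 = Th F" "quasi_filter F \<longrightarrow> quasi_filter G0"
      "bounded_morphism G0 (ue F) f" "f ` pts G0 = pts (ue F)" "inj_on \<iota> (pts G0)"
    using main_nonempty[OF mon False] by blast
  note t = transfer[OF G0(1) G0(6)]
  have "monotonic (tr \<iota> G0)" "Th (tr \<iota> G0) = Th F" "quasi_filter F \<longrightarrow> quasi_filter (tr \<iota> G0)"
    using t(1,2,3) G0(2,3) by auto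
  moreover have "bounded_morphism (tr \<iota> G0) (ue F) (f \<circ> inv_into (pts G0) \<iota>)" by (rule t(4)[OF G0(4)])
  moreover have "(f \<circ> inv_into (pts G0) \<iota>) ` pts (tr \<iota> G0) = pts (ue F)" using t(5)[of f] G0(5) by simp
  ultimately show ?thesis by blast
qed

theorem lemma4p4:
  fixes F :: "'a nframe"
  assumes "monotonic F"
  shows "(\<exists>G :: 'a set set set nframe. nframe G \<and> Th G = Th F \<and>
            (\<exists>f. bounded_morphism G (ue F) f \<and> f ` pts G = pts (ue F)))
       \<and> (\<exists>G :: 'a set set set nframe. monotonic G \<and> Th G = Th F \<and>
            (\<exists>f. bounded_morphism G (ue F) f \<and> f ` pts G = pts (ue F)))
       \<and> (quasi_filter F \<longrightarrow>
          (\<exists>G :: 'a set set set nframe. quasi_filter G \<and> Th G = Th F \<and>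
            (\<exists>f. bounded_morphism G (ue F) f \<and> f ` pts G = pts (ue F))))"
proof -
  obtain G :: "'a set set set nframe" where G: "monotonic G" "Th G = Th F" "quasi_filter F \<longrightarrow> quasi_filter G"
    and f: "\<exists>f. bounded_morphism G (ue F) f \<and> f ` pts G = pts (ue F)"
    using key[OF assms] by blast
  have "nframe G" using G(1) by (simp add: monotonic_def)
  then show ?thesis using G f by blast
qed


end
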